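(* Let $\mathcal{F}$ be an indecomposable coherent sheaf on $\mathbb{P}^1$. Then $\mathcal{F}$ is described by a defining triple $(\mathcal{F}',\mathcal{F}'',\varphi)$ of one of the following forms, where $\mathcal{F}'=\widetilde{M'}$, $\mathcal{F}''=\widetilde{M''}$ are indecomposable coherent sheaves (or $0$) on $U_1$, $U_2$ respectively and $\varphi:\mathcal{F}'|_{U_1\cap U_2}\cong\mathcal{F}''|_{U_1\cap U_2}$: (1) $(\mathcal{F}',0,0)$ with $\Gamma_{M'}$ of type 1; (2) $(0,\mathcal{F}'',0)$ with $\Gamma_{M''}$ of type 1; (3) $(\mathcal{F}',\mathcal{F}'',\varphi)$ with $\Gamma_{M'}$, $\Gamma_{M''}$ of type 2, and after choosing isomorphisms $\mathcal{F}'|_{U_1\cap U_2}\cong\mathcal{L}$ and $\mathcal{F}''|_{U_1\cap U_2}\cong\mathcal{L}$, $\varphi$ is identified with $\phi_n$ for some $n\in\mathbb{Z}$; (4) $(\mathcal{F}',\mathcal{F}'',\psi)$ with $\Gamma_{M'}$, $\Gamma_{M''}$ of type 3, and after choosing isomorphisms $\mathcal{F}'|_{U_1\cap U_2}\cong\mathcal{C}_k$ and $\mathcal{F}''|_{U_1\cap U_2}\cong\mathcal{C}_k$, $\psi$ is identified with $\psi_m$ for some $m\in\mathbb{Z}/k\mathbb{Z}$. Moreover, $\mathcal{F}$ is torsion in cases (1) and (2), and torsion-free in cases (3) and (4).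
   Context: Monoids are commutative with $1$ and absorbing $0$; a module is a pointed set $(M,* )$ with action satisfying $1m=m$, $a(bm)=(ab)m$, $0m=*$. $\mathbb P^1$ is the monoid scheme obtained by gluing $U_1=\operatorname{MSpec}(\langle t\rangle)$ and $U_2=\operatorname{MSpec}(\langle t^{-1}\rangle)$ along $U_1\cap U_2=\operatorname{MSpec}(\langle t,t^{-1}\rangle)$, where $\langle t\rangle=\{0,1,t,t^2,\dots\}$, $\langle t^{-1}\rangle=\{0,1,t^{-1},t^{-2},\dots\}$, $\langle t,t^{-1}\rangle=\{0\}\cup\{t^n:n\in\mathbb Z\}$. A coherent sheaf on $\mathbb P^1$ is equivalently a defining triple $(\mathcal F',\mathcal F'',\varphi)$ of coherent sheaves $\mathcal F'=\widetilde{M'}$ on $U_1$, $\mathcal F''=\widetilde{M''}$ on $U_2$ ($M',M''$ finitely generated modules; restriction to $U_1\cap U_2$ is localization at $t$, resp. $t^{-1}$) and a gluing isomorphism $\varphi$ over $U_1\cap U_2$. A coherent sheaf is indecomposable if non-zero and not a direct sum (sectionwise wedge sum) of two non-zero coherent sheaves. For a module $M$ over $\langle s\rangle$ ($s=t$ or $t^{-1}$), $\Gamma_M$ is the directed graph on $M\setminus\{*\}$ with edges $m\to sm$ whenever $sm\ne*$. Type 1: a rooted tree (underlying undirected graph a tree with a unique vertex without outgoing edge, reached from every vertex by a directed path). Type 2: a finite rooted tree whose root is joined to the initial vertex of an infinite directed ray $v_0\to v_1\to\cdots$. Type 3: an oriented directed cycle with rooted trees attached. $\mathcal L=\widetilde{\langle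 t,t^{-1}\rangle}$ on $U_1\cap U_2$, with automorphisms $\phi_n$ induced by multiplication by $t^n$, $n\in\mathbb Z$. $\mathcal C_k=\widetilde{C_k}$ with $C_k=\{*,1,t,\dots,t^{k-1}\}$ and $t$ acting by the cyclic permutation $1\mapsto t\mapsto\cdots\mapsto t^{k-1}\mapsto1$; its automorphisms $\psi_m$ are induced by multiplication by $t^m$ and depend only on $m\bmod k$. An element $m$ of a module is torsion if some nonzero element of the monoid sends it to $*$; a module is torsion if all elements are torsion and torsion-free if only $*$ is; a quasicoherent sheaf is torsion (resp. torsion-free) if its sections over every open affine form a torsion (resp. torsion-free) module. *)

theory Defs
  imports Main
begin

text \<open>A module over the monoid \<langle>s\<rangle> = {0,1,s,s^2,...} is a pointed set (M, pt)
  with an action; it is determined by the action of the generator s, a self-map f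
  of M fixing pt (the action of s^n is f^^n, the action of 0 is the constant pt).\<close>

definition is_mod :: "'a set \<Rightarrow> 'a \<Rightarrow> ('a \<Rightarrow> 'a) \<Rightarrow> bool" where
  "is_mod M pt f \<longleftrightarrow> pt \<in> M \<and> (\<forall>m\<in>M. f m \<in> M) \<and> f pt = pt"

definition fin_gen :: "'a set \<Rightarrow> 'a \<Rightarrow> ('a \<Rightarrow> 'a) \<Rightarrow> bool" where
  "fin_gen M pt f \<longleftrightarrow> (\<exists>G. finite G \<and> G \<subseteq> M \<and>
      M = insert pt {(f ^^ n) g | g n. g \<in> G})"

definition mod_split :: "'a set \<Rightarrow> 'a \<Rightarrow> ('a \<Rightarrow> 'a) \<Rightarrow> 'a set \<Rightarrow> 'a set \<Rightarrow> bool" where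
  "mod_split M pt f A B \<longleftrightarrow> is_mod A pt f \<and> is_mod B pt f \<and> A \<union> B = M \<and> A \<inter> B = {pt}"

definition mod_indecomp :: "'a set \<Rightarrow> 'a \<Rightarrow> ('a \<Rightarrow> 'a) \<Rightarrow> bool" where
  "mod_indecomp M pt f \<longleftrightarrow> M \<noteq> {pt} \<and>
     \<not> (\<exists>A B. mod_split M pt f A B \<and> A \<noteq> {pt} \<and> B \<noteq> {pt})"

text \<open>Torsion: nonzero monoid elements are s^n, acting by f^^n.\<close>
definition mod_torsion :: "'a set \<Rightarrow> 'a \<Rightarrow> ('a \<Rightarrow> 'a) \<Rightarrow> bool" where
  "mod_torsion M pt f \<longleftrightarrow> (\<forall>m\<in>M. \<exists>n. (f ^^ n) m = pt)"

definition mod_torsion_free :: "'a set \<Rightarrow> 'a \<Rightarrow> ('a \<Rightarrow> 'a) \<Rightarrow> bool" where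
  "mod_torsion_free M pt f \<longleftrightarrow> (\<forall>m\<in>M. (\<exists>n. (f ^^ n) m = pt) \<longrightarrow> m = pt)"

text \<open>The element (m,i) represents s^-i m.  Its class in the localization M_s.\<close>
definition cls :: "'a set \<Rightarrow> ('a \<Rightarrow> 'a) \<Rightarrow> 'a \<times> nat \<Rightarrow> ('a \<times> nat) set" where
  "cls M f p = {(m', j). m' \<in> M \<and> (\<exists>k. (f ^^ (k + j)) (fst p) = (f ^^ (k + snd p)) m')}"

definition loc :: "'a set \<Rightarrow> ('a \<Rightarrow> 'a) \<Rightarrow> ('a \<times> nat) set set" where
  "loc M f = {cls M f (m, i) | m i. m \<in> M}"

definition loc_pt :: "'a set \<Rightarrow> ('a \<Rightarrow> 'a) \<Rightarrow> 'a \<Rightarrow> ('a \<times> nat) set" where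
  "loc_pt M f pt = cls M f (pt, 0)"

definition loc_fwd :: "'a set \<Rightarrow> ('a \<Rightarrow> 'a) \<Rightarrow> ('a \<times> nat) set \<Rightarrow> ('a \<times> nat) set" where
  "loc_fwd M f x = (let p = (SOME p. p \<in> x) in cls M f (f (fst p), snd p))"

definition loc_bwd :: "'a set \<Rightarrow> ('a \<Rightarrow> 'a) \<Rightarrow> ('a \<times> nat) set \<Rightarrow> ('a \<times> nat) set" where
  "loc_bwd M f x = (let p = (SOME p. p \<in> x) in cls M f (fst p, Suc (snd p)))"

text \<open>Such a module is a pointed set N with the actions sig of t and tau of t^-1.
  Isomorphism: bijection preserving the base point and commuting with t.\<close>
definition lmod_iso :: "'b set \<Rightarrow> 'b \<Rightarrow> ('b \<Rightarrow> 'b) \<Rightarrow> 'c set \<Rightarrow> 'c \<Rightarrow> ('c \<Rightarrow> 'c)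
    \<Rightarrow> ('b \<Rightarrow> 'c) \<Rightarrow> bool" where
  "lmod_iso N1 p1 s1 N2 p2 s2 h \<longleftrightarrow> bij_betw h N1 N2 \<and> h p1 = p2 \<and>
     (\<forall>x\<in>N1. h (s1 x) = s2 (h x))"

text \<open>Nonzero monoid elements are t^n (n \<in> Z), acting by sig^^n or tau^^(-n).\<close>
definition lmod_torsion :: "'b set \<Rightarrow> 'b \<Rightarrow> ('b \<Rightarrow> 'b) \<Rightarrow> ('b \<Rightarrow> 'b) \<Rightarrow> bool" where
  "lmod_torsion N pt sig tau \<longleftrightarrow> (\<forall>x\<in>N. \<exists>n. (sig ^^ n) x = pt \<or> (tau ^^ n) x = pt)"

definition lmod_torsion_free :: "'b set \<Rightarrow> 'b \<Rightarrow> ('b \<Rightarrow> 'b) \<Rightarrow> ('b \<Rightarrow> 'b) \<Rightarrow> bool" where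
  "lmod_torsion_free N pt sig tau \<longleftrightarrow>
     (\<forall>x\<in>N. (\<exists>n. (sig ^^ n) x = pt \<or> (tau ^^ n) x = pt) \<longrightarrow> x = pt)"

text \<open>The module \<langle>t,t^-1\<rangle> (None = 0, Some n = t^n) underlying L, and phi_n.\<close>
definition L_car :: "int option set" where "L_car = UNIV"
definition L_t :: "int option \<Rightarrow> int option" where "L_t = map_option (\<lambda>j. j + 1)"
definition phiL :: "int \<Rightarrow> int option \<Rightarrow> int option" where "phiL n = map_option (\<lambda>j. j + n)"

text \<open>C_k = {*,1,t,...,t^(k-1)} (None = *, Some j = t^j), cyclic t-action, and psi_m.\<close>
definition C_car :: "nat \<Rightarrow> int option set" where
  "C_car k = insert None (Some ` {0..<int k})"
definition C_t :: "nat \<Rightarrow> int option \<Rightarrow> int option" where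
  "C_t k = map_option (\<lambda>j. (j + 1) mod int k)"
definition psiC :: "nat \<Rightarrow> int \<Rightarrow> int option \<Rightarrow> int option" where
  "psiC k m = map_option (\<lambda>j. (j + m) mod int k)"

text \<open>Vertices M - {pt}; edge v \<rightarrow> f v when f v \<noteq> pt.  For a vertex subset S we
  consider the induced subgraph, whose edges are indexed by their source v \<in> S with
  f v \<in> S.  Underlying undirected (multi)graph: edge v joins v and f v.\<close>

definition uadj :: "('a \<Rightarrow> 'a) \<Rightarrow> 'a set \<Rightarrow> 'a \<Rightarrow> 'a \<Rightarrow> bool" where
  "uadj f S a b \<longleftrightarrow> a \<in> S \<and> b \<in> S \<and> (f a = b \<or> f b = a)"

definition uconnected :: "('a \<Rightarrow> 'a) \<Rightarrow> 'a set \<Rightarrow> bool" where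
  "uconnected f S \<longleftrightarrow> (\<forall>u\<in>S. \<forall>w\<in>S. \<exists>xs. xs \<noteq> [] \<and> hd xs = u \<and> last xs = w \<and>
      set xs \<subseteq> S \<and> (\<forall>i. Suc i < length xs \<longrightarrow> uadj f S (xs ! i) (xs ! Suc i)))"

definition uacyclic :: "('a \<Rightarrow> 'a) \<Rightarrow> 'a set \<Rightarrow> bool" where
  "uacyclic f S \<longleftrightarrow> \<not> (\<exists>es xs. es \<noteq> [] \<and> distinct es \<and> set es \<subseteq> {v \<in> S. f v \<in> S} \<and>
      length xs = Suc (length es) \<and> hd xs = last xs \<and> distinct (butlast xs) \<and>
      (\<forall>i<length es. {es ! i, f (es ! i)} = {xs ! i, xs ! Suc i}))"

definition utree :: "('a \<Rightarrow> 'a) \<Rightarrow> 'a set \<Rightarrow> bool" where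
  "utree f S \<longleftrightarrow> uconnected f S \<and> uacyclic f S"

definition rooted_tree :: "('a \<Rightarrow> 'a) \<Rightarrow> 'a set \<Rightarrow> 'a \<Rightarrow> bool" where
  "rooted_tree f S r \<longleftrightarrow> r \<in> S \<and> f r \<notin> S \<and> (\<forall>v\<in>S. f v \<notin> S \<longrightarrow> v = r) \<and>
     (\<forall>v\<in>S. \<exists>n. (f ^^ n) v = r \<and> (\<forall>i\<le>n. (f ^^ i) v \<in> S)) \<and> utree f S"

definition graph_type1 :: "'a set \<Rightarrow> 'a \<Rightarrow> ('a \<Rightarrow> 'a) \<Rightarrow> bool" where
  "graph_type1 M pt f \<longleftrightarrow> (\<exists>r. rooted_tree f (M - {pt}) r)"

definition graph_type2 :: "'a set \<Rightarrow> 'a \<Rightarrow> ('a \<Rightarrow> 'a) \<Rightarrow> bool" where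
  "graph_type2 M pt f \<longleftrightarrow> (\<exists>T r (v :: nat \<Rightarrow> 'a). finite T \<and> rooted_tree f T r \<and> inj v \<and>
     range v \<inter> T = {} \<and> M - {pt} = T \<union> range v \<and> f r = v 0 \<and>
     (\<forall>i. f (v i) = v (Suc i)))"

definition graph_type3 :: "'a set \<Rightarrow> 'a \<Rightarrow> ('a \<Rightarrow> 'a) \<Rightarrow> bool" where
  "graph_type3 M pt f \<longleftrightarrow> (\<exists>c (k::nat) P.
     let C = (\<lambda>i. (f ^^ i) c) ` {..<k} in
     k \<ge> 1 \<and> (f ^^ k) c = c \<and> inj_on (\<lambda>i. (f ^^ i) c) {..<k} \<and> C \<subseteq> M - {pt} \<and>
     (\<forall>T\<in>P. \<exists>r. rooted_tree f T r \<and> f r \<in> C) \<and> pairwise disjnt P \<and> {} \<notin> P \<and>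
     \<Union>P = (M - {pt}) - C)"

text \<open>(M1,p1,f1): module over \<langle>t\<rangle> (f1 = action of t), sections on U1;
  (M2,p2,f2): module over \<langle>t^-1\<rangle> (f2 = action of t^-1), sections on U2;
  phi: gluing isomorphism of \<langle>t,t^-1\<rangle>-modules between the localizations, where
  t acts on loc M1 by loc_fwd M1 f1 and on loc M2 by loc_bwd M2 f2.\<close>

definition coherent_triple :: "'a set \<Rightarrow> 'a \<Rightarrow> ('a \<Rightarrow> 'a) \<Rightarrow> 'a set \<Rightarrow> 'a \<Rightarrow> ('a \<Rightarrow> 'a)
    \<Rightarrow> (('a \<times> nat) set \<Rightarrow> ('a \<times> nat) set) \<Rightarrow> bool" where
  "coherent_triple M1 p1 f1 M2 p2 f2 phi \<longleftrightarrow>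
     is_mod M1 p1 f1 \<and> fin_gen M1 p1 f1 \<and> is_mod M2 p2 f2 \<and> fin_gen M2 p2 f2 \<and>
     lmod_iso (loc M1 f1) (loc_pt M1 f1 p1) (loc_fwd M1 f1)
              (loc M2 f2) (loc_pt M2 f2 p2) (loc_bwd M2 f2) phi"

text \<open>Direct sum decomposition into two nonzero coherent subsheaves: wedge splittings of
  both modules compatible with the gluing.\<close>
definition triple_decomposable :: "'a set \<Rightarrow> 'a \<Rightarrow> ('a \<Rightarrow> 'a) \<Rightarrow> 'a set \<Rightarrow> 'a \<Rightarrow> ('a \<Rightarrow> 'a)
    \<Rightarrow> (('a \<times> nat) set \<Rightarrow> ('a \<times> nat) set) \<Rightarrow> bool" where
  "triple_decomposable M1 p1 f1 M2 p2 f2 phi \<longleftrightarrow> (\<exists>A1 B1 A2 B2.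
     mod_split M1 p1 f1 A1 B1 \<and> mod_split M2 p2 f2 A2 B2 \<and>
     (\<forall>a\<in>A1. \<forall>i. phi (cls M1 f1 (a, i)) \<in> {cls M2 f2 (b, j) | b j. b \<in> A2}) \<and>
     (\<forall>a\<in>B1. \<forall>i. phi (cls M1 f1 (a, i)) \<in> {cls M2 f2 (b, j) | b j. b \<in> B2}) \<and>
     (A1 \<noteq> {p1} \<or> A2 \<noteq> {p2}) \<and> (B1 \<noteq> {p1} \<or> B2 \<noteq> {p2}))"

definition triple_indecomp :: "'a set \<Rightarrow> 'a \<Rightarrow> ('a \<Rightarrow> 'a) \<Rightarrow> 'a set \<Rightarrow> 'a \<Rightarrow> ('a \<Rightarrow> 'a)
    \<Rightarrow> (('a \<times> nat) set \<Rightarrow> ('a \<times> nat) set) \<Rightarrow> bool" where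
  "triple_indecomp M1 p1 f1 M2 p2 f2 phi \<longleftrightarrow> (M1 \<noteq> {p1} \<or> M2 \<noteq> {p2}) \<and>
     \<not> triple_decomposable M1 p1 f1 M2 p2 f2 phi"

text \<open>Open affines of P^1: (empty,) U1, U2, U1 \<inter> U2; sections M1, M2, and the
  localizations.\<close>
definition triple_torsion :: "'a set \<Rightarrow> 'a \<Rightarrow> ('a \<Rightarrow> 'a) \<Rightarrow> 'a set \<Rightarrow> 'a \<Rightarrow> ('a \<Rightarrow> 'a) \<Rightarrow> bool" where
  "triple_torsion M1 p1 f1 M2 p2 f2 \<longleftrightarrow> mod_torsion M1 p1 f1 \<and> mod_torsion M2 p2 f2 \<and>
     lmod_torsion (loc M1 f1) (loc_pt M1 f1 p1) (loc_fwd M1 f1) (loc_bwd M1 f1) \<and>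
     lmod_torsion (loc M2 f2) (loc_pt M2 f2 p2) (loc_bwd M2 f2) (loc_fwd M2 f2)"

definition triple_torsion_free :: "'a set \<Rightarrow> 'a \<Rightarrow> ('a \<Rightarrow> 'a) \<Rightarrow> 'a set \<Rightarrow> 'a \<Rightarrow> ('a \<Rightarrow> 'a) \<Rightarrow> bool" where
  "triple_torsion_free M1 p1 f1 M2 p2 f2 \<longleftrightarrow> mod_torsion_free M1 p1 f1 \<and> mod_torsion_free M2 p2 f2 \<and>
     lmod_torsion_free (loc M1 f1) (loc_pt M1 f1 p1) (loc_fwd M1 f1) (loc_bwd M1 f1) \<and>
     lmod_torsion_free (loc M2 f2) (loc_pt M2 f2 p2) (loc_bwd M2 f2) (loc_fwd M2 f2)"

end

theory Submission
  imports Defs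
begin

lemma funpow_in: "is_mod M pt f \<Longrightarrow> m \<in> M \<Longrightarrow> (f^^n) m \<in> M"
  by (induction n) (auto simp: is_mod_def)
lemma funpow_pt: "is_mod M pt f \<Longrightarrow> (f^^n) pt = pt"
  by (induction n) (auto simp: is_mod_def)
lemma fpa: "(f^^(a+b)) x = (f^^a) ((f^^b) x)" by (simp add: funpow_add)
lemma fS: "f ((f^^n) x) = (f^^n) (f x)"
  by (rule funpow_swap1)

definition rel :: "('a \<Rightarrow> 'a) \<Rightarrow> 'a \<times> nat \<Rightarrow> 'a \<times> nat \<Rightarrow> bool" where
 "rel f p q \<longleftrightarrow> (\<exists>k. (f^^(k + snd q)) (fst p) = (f^^(k + snd p)) (fst q))"

lemma rel_refl: "rel f p p" by (auto simp: rel_def)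
lemma rel_sym: "rel f p q \<Longrightarrow> rel f q p" unfolding rel_def by metis
lemma rel_trans: assumes "rel f p q" "rel f q r" shows "rel f p r"
proof -
  obtain m i m' j m'' h where P: "p = (m,i)" "q = (m',j)" "r = (m'',h)"
    by (metis prod.exhaust)
  obtain k where k: "(f^^(k+j)) m = (f^^(k+i)) m'" using assms(1) P by (auto simp: rel_def)
  obtain l where l: "(f^^(l+h)) m' = (f^^(l+j)) m''" using assms(2) P by (auto simp: rel_def)
  have "(f^^((k+l+j)+h)) m = (f^^(l+h)) ((f^^(k+j)) m)" by (simp add: fpa[symmetric] algebra_simps)
  also have "\<dots> = (f^^(l+h)) ((f^^(k+i)) m')" using k by simp
  also have "\<dots> = (f^^(k+i)) ((f^^(l+h)) m')" by (simp add: fpa[symmetric] algebra_simps)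
  also have "\<dots> = (f^^(k+i)) ((f^^(l+j)) m'')" using l by simp
  also have "\<dots> = (f^^((k+l+j)+i)) m''" by (simp add: fpa[symmetric] algebra_simps)
  finally show ?thesis using P by (auto simp: rel_def)
qed

lemma mem_cls: "q \<in> cls M f p \<longleftrightarrow> fst q \<in> M \<and> rel f p q"
  by (cases q) (auto simp: cls_def rel_def)

lemma cls_self: "m \<in> M \<Longrightarrow> (m,i) \<in> cls M f (m,i)"
  by (auto simp: mem_cls rel_refl)

lemma cls_eq: assumes "m \<in> M" "m' \<in> M"
  shows "cls M f (m,i) = cls M f (m',j) \<longleftrightarrow> rel f (m,i) (m',j)"
proof
  assume "cls M f (m,i) = cls M f (m',j)"
  then have "(m',j) \<in> cls M f (m,i)" using cls_self[OF assms(2)] by simp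
  then show "rel f (m,i) (m',j)" by (simp add: mem_cls)
next
  assume r: "rel f (m,i) (m',j)"
  have a: "rel f (m',j) q" if "rel f (m,i) q" for q using rel_trans[OF rel_sym[OF r] that] .
  have b: "rel f (m,i) q" if "rel f (m',j) q" for q using rel_trans[OF r that] .
  show "cls M f (m,i) = cls M f (m',j)"
  proof (rule set_eqI)
    fix q show "q \<in> cls M f (m,i) \<longleftrightarrow> q \<in> cls M f (m',j)"
      unfolding mem_cls using a[of q] b[of q] by argo
  qed
qed

lemma rel_f: assumes "rel f (m,i) (m',j)" shows "rel f (f m, i) (f m', j)"
proof -
  obtain k where k: "(f^^(k+j)) m = (f^^(k+i)) m'" using assms by (auto simp: rel_def)
  hence "f ((f^^(k+j)) m) = f ((f^^(k+i)) m')" by simp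
  hence "(f^^(k+j)) (f m) = (f^^(k+i)) (f m')" by (simp only: fS)
  thus ?thesis unfolding rel_def by auto
qed

lemma rel_Suc: assumes "rel f (m,i) (m',j)" shows "rel f (m, Suc i) (m', Suc j)"
proof -
  obtain k where k: "(f^^(k+j)) m = (f^^(k+i)) m'" using assms by (auto simp: rel_def)
  hence "f ((f^^(k+j)) m) = f ((f^^(k+i)) m')" by simp
  hence "(f^^(k+Suc j)) m = (f^^(k+Suc i)) m'" by simp
  thus ?thesis unfolding rel_def by auto
qed

lemma some_cls: assumes "m \<in> M"
  obtains m' j where "(SOME p. p \<in> cls M f (m,i)) = (m',j)" "m' \<in> M" "rel f (m,i) (m',j)"
proof -
  have "\<exists>p. p \<in> cls M f (m,i)" using cls_self[OF assms] by blast
  then have "(SOME p. p \<in> cls M f (m,i)) \<in> cls M f (m,i)" by (rule someI_ex)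
  then show ?thesis using that by (cases "(SOME p. p \<in> cls M f (m,i))") (auto simp: mem_cls)
qed

lemma loc_fwd_cls: assumes "is_mod M pt f" "m \<in> M"
  shows "loc_fwd M f (cls M f (m,i)) = cls M f (f m, i)"
proof -
  obtain m' j where S: "(SOME p. p \<in> cls M f (m,i)) = (m',j)" "m' \<in> M" "rel f (m,i) (m',j)"
    using some_cls[OF assms(2)] by blast
  have A: "f m' \<in> M" "f m \<in> M" using assms S by (auto simp: is_mod_def)
  have "rel f (f m', j) (f m, i)" using rel_f[OF rel_sym[OF S(3)]] .
  then have "cls M f (f m', j) = cls M f (f m, i)"
    by (rule cls_eq[OF A, THEN iffD2])
  moreover have "loc_fwd M f (cls M f (m,i)) = cls M f (f m', j)"
    unfolding loc_fwd_def Let_def S(1) by simp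
  ultimately show ?thesis by simp
qed

lemma loc_bwd_cls: assumes "m \<in> M"
  shows "loc_bwd M f (cls M f (m,i)) = cls M f (m, Suc i)"
proof -
  obtain m' j where S: "(SOME p. p \<in> cls M f (m,i)) = (m',j)" "m' \<in> M" "rel f (m,i) (m',j)"
    using some_cls[OF assms] by blast
  have "rel f (m', Suc j) (m, Suc i)" using rel_Suc[OF rel_sym[OF S(3)]] .
  then have "cls M f (m', Suc j) = cls M f (m, Suc i)"
    by (rule cls_eq[OF S(2) assms, THEN iffD2])
  moreover have "loc_bwd M f (cls M f (m,i)) = cls M f (m', Suc j)"
    unfolding loc_bwd_def Let_def S(1) by simp
  ultimately show ?thesis by simp
qed

lemma cls_shift: assumes "is_mod M pt f" "m \<in> M"
  shows "cls M f (m,i) = cls M f ((f^^a) m, i + a)"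
proof -
  have "rel f (m,i) ((f^^a) m, i + a)" unfolding rel_def
    by (rule exI[of _ 0]) (simp add: fpa[symmetric] algebra_simps)
  then show ?thesis using cls_eq funpow_in[OF assms] assms(2) by metis
qed

lemma loc_fwd_pow: assumes "is_mod M pt f" "m \<in> M"
  shows "(loc_fwd M f ^^ n) (cls M f (m,i)) = cls M f ((f^^n) m, i)"
  by (induction n) (auto simp: loc_fwd_cls[OF assms(1)] funpow_in[OF assms])

lemma loc_bwd_pow: assumes "m \<in> M"
  shows "(loc_bwd M f ^^ n) (cls M f (m,i)) = cls M f (m, i + n)"
  by (induction n) (auto simp: loc_bwd_cls[OF assms])

lemma cls_pt_iff: assumes "is_mod M pt f" "m \<in> M"
  shows "cls M f (m,i) = loc_pt M f pt \<longleftrightarrow> (\<exists>n. (f^^n) m = pt)"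
proof -
  have pM: "pt \<in> M" using assms by (simp add: is_mod_def)
  have "cls M f (m,i) = loc_pt M f pt \<longleftrightarrow> rel f (m,i) (pt,0)"
    unfolding loc_pt_def using cls_eq[OF assms(2) pM] by simp
  also have "\<dots> \<longleftrightarrow> (\<exists>n. (f^^n) m = pt)"
    unfolding rel_def using funpow_pt[OF assms(1)]
    by (auto simp: fpa)
  finally show ?thesis .
qed

lemma loc_cls: "m \<in> M \<Longrightarrow> cls M f (m,i) \<in> loc M f" by (auto simp: loc_def)
lemma loc_pt_in: "is_mod M pt f \<Longrightarrow> loc_pt M f pt \<in> loc M f"
  by (auto simp: loc_pt_def loc_def is_mod_def)

lemma loc_fwd_bwd: assumes "is_mod M pt f" "x \<in> loc M f"
  shows "loc_fwd M f (loc_bwd M f x) = x"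
proof -
  obtain m i where x: "x = cls M f (m,i)" "m \<in> M" using assms by (auto simp: loc_def)
  have "loc_fwd M f (loc_bwd M f x) = cls M f (f m, Suc i)"
    using x by (simp add: loc_bwd_cls loc_fwd_cls[OF assms(1)])
  also have "\<dots> = x" using cls_shift[OF assms(1) x(2), of i 1] x(1) by simp
  finally show ?thesis .
qed

lemma loc_bwd_fwd: assumes "is_mod M pt f" "x \<in> loc M f"
  shows "loc_bwd M f (loc_fwd M f x) = x"
proof -
  obtain m i where x: "x = cls M f (m,i)" "m \<in> M" using assms by (auto simp: loc_def)
  have fm: "f m \<in> M" using assms x by (auto simp: is_mod_def)
  have "loc_bwd M f (loc_fwd M f x) = cls M f (f m, Suc i)"
    using x fm by (simp add: loc_bwd_cls loc_fwd_cls[OF assms(1)])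
  also have "\<dots> = x" using cls_shift[OF assms(1) x(2), of i 1] x(1) by simp
  finally show ?thesis .
qed

lemma loc_fwd_in: assumes "is_mod M pt f" "x \<in> loc M f" shows "loc_fwd M f x \<in> loc M f"
proof -
  obtain m i where x: "x = cls M f (m,i)" "m \<in> M" using assms by (auto simp: loc_def)
  have "f m \<in> M" using assms x by (auto simp: is_mod_def)
  then show ?thesis using x loc_fwd_cls[OF assms(1) x(2)] loc_cls by metis
qed
lemma loc_bwd_in: assumes "x \<in> loc M f" shows "loc_bwd M f x \<in> loc M f"
proof -
  obtain m i where x: "x = cls M f (m,i)" "m \<in> M" using assms by (auto simp: loc_def)
  then show ?thesis using x loc_bwd_cls[OF x(2)] loc_cls by metis
qed

lemma fSuc: "(f^^(Suc k)) v = (f^^k) (f v)" by (simp only: funpow_Suc_right comp_apply)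

lemma least_step:
  assumes "P ((f^^n) v)" "\<not> P v"
  shows "(LEAST n. P ((f^^n) v)) = Suc (LEAST n. P ((f^^n) (f v)))"
proof -
  define d where "d = (LEAST n. P ((f^^n) v))"
  define d' where "d' = (LEAST n. P ((f^^n) (f v)))"
  have dv: "P ((f^^d) v)" unfolding d_def by (rule LeastI[of _ n]) (fact assms(1))
  have "d \<noteq> 0" using dv assms(2) by (metis funpow_0)
  then obtain k where k: "d = Suc k" by (cases d) auto
  have "P ((f^^k) (f v))" using dv k by (simp only: fSuc)
  hence 1: "d' \<le> k" unfolding d'_def by (rule Least_le)
  have "P ((f^^d') (f v))" unfolding d'_def by (rule LeastI[of _ k]) (fact)
  hence "P ((f^^(Suc d')) v)" by (simp only: fSuc)
  hence "d \<le> Suc d'" unfolding d_def by (rule Least_le)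
  with 1 k show ?thesis unfolding d_def[symmetric] d'_def[symmetric] by simp
qed

lemma least_props:
  assumes "P ((f^^n) v)" "\<not> P v"
  shows "P ((f^^(LEAST n. P ((f^^n) v))) v)" "(LEAST n. P ((f^^n) v)) > 0"
    "\<And>i. i < (LEAST n. P ((f^^n) v)) \<Longrightarrow> \<not> P ((f^^i) v)"
proof -
  show "P ((f^^(LEAST n. P ((f^^n) v))) v)" by (rule LeastI[of _ n]) (fact assms(1))
  then show "(LEAST n. P ((f^^n) v)) > 0" using assms(2) by (metis funpow_0 gr0I)
  show "\<And>i. i < (LEAST n. P ((f^^n) v)) \<Longrightarrow> \<not> P ((f^^i) v)" using not_less_Least by blast
qed

inductive walk :: "('a \<Rightarrow> 'a) \<Rightarrow> 'a set \<Rightarrow> 'a list \<Rightarrow> bool" for f S where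
  w1: "v \<in> S \<Longrightarrow> walk f S [v]"
| w2: "uadj f S a b \<Longrightarrow> walk f S (b # xs) \<Longrightarrow> walk f S (a # b # xs)"

lemma walk_props: "walk f S xs \<Longrightarrow> xs \<noteq> [] \<and> set xs \<subseteq> S \<and>
   (\<forall>i. Suc i < length xs \<longrightarrow> uadj f S (xs ! i) (xs ! Suc i))"
proof (induction rule: walk.induct)
  case (w1 v) then show ?case by simp
next
  case (w2 a b xs)
  have "a \<in> S" using w2(1) by (simp add: uadj_def)
  moreover have "uadj f S ((a#b#xs) ! i) ((a#b#xs) ! Suc i)" if "Suc i < length (a#b#xs)" for i
  proof (cases i)
    case 0 then show ?thesis using w2(1) by simp
  next
    case (Suc i') then show ?thesis using w2(3) that by auto
  qed
  ultimately show ?case using w2(3) by auto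
qed

lemma walk_app: "walk f S xs \<Longrightarrow> walk f S ys \<Longrightarrow> last xs = hd ys \<Longrightarrow> walk f S (xs @ tl ys)"
proof (induction rule: walk.induct)
  case (w1 v)
  then show ?case by (cases ys) (auto dest: walk_props)
next
  case (w2 a b xs)
  then show ?case by (auto intro: walk.w2)
qed

lemma uadj_sym: "uadj f S a b \<Longrightarrow> uadj f S b a" by (auto simp: uadj_def)

lemma walk_rev: "walk f S xs \<Longrightarrow> walk f S (rev xs)"
proof (induction rule: walk.induct)
  case (w1 v) then show ?case by (simp add: walk.w1)
next
  case (w2 a b xs)
  have "walk f S [b, a]" using w2(1) by (auto intro!: walk.intros simp: uadj_def)
  then have "walk f S (rev (b#xs) @ tl [b,a])" by (rule walk_app[OF w2(3)]) simp
  then show ?case by simp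
qed

definition wconn :: "('a \<Rightarrow> 'a) \<Rightarrow> 'a set \<Rightarrow> 'a \<Rightarrow> 'a \<Rightarrow> bool" where
  "wconn f S u w \<longleftrightarrow> (\<exists>xs. walk f S xs \<and> hd xs = u \<and> last xs = w)"

lemma wconn_refl: "u \<in> S \<Longrightarrow> wconn f S u u"
  unfolding wconn_def by (rule exI[of _ "[u]"]) (auto intro: walk.w1)

lemma wconn_sym: "wconn f S u w \<Longrightarrow> wconn f S w u"
  unfolding wconn_def
  by (metis hd_rev last_rev walk_rev)

lemma wconn_trans: "wconn f S u w \<Longrightarrow> wconn f S w z \<Longrightarrow> wconn f S u z"
proof -
  assume a: "wconn f S u w" "wconn f S w z"
  then obtain xs ys where xs: "walk f S xs" "hd xs = u" "last xs = w"
     and ys: "walk f S ys" "hd ys = w" "last ys = z" unfolding wconn_def by blast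
  have ne: "xs \<noteq> []" "ys \<noteq> []" using walk_props xs(1) ys(1) by auto
  have W: "walk f S (xs @ tl ys)" using walk_app[OF xs(1) ys(1)] xs ys by simp
  have "hd (xs @ tl ys) = u" using ne xs by simp
  moreover have "last (xs @ tl ys) = z"
  proof (cases "tl ys = []")
    case True
    then have "ys = [hd ys]" using ne by (cases ys) auto
    then show ?thesis using True xs ys by (metis append_Nil2 last_ConsL)
  next
    case False
    then show ?thesis using ys ne by (cases ys) auto
  qed
  ultimately show ?thesis using W unfolding wconn_def by blast
qed

lemma wconn_step: "v \<in> S \<Longrightarrow> f v \<in> S \<Longrightarrow> wconn f S v (f v)"
  unfolding wconn_def
  by (rule exI[of _ "[v, f v]"]) (auto intro!: walk.intros simp: uadj_def)

lemma wconn_path: "(\<forall>i\<le>n. (f^^i) v \<in> S) \<Longrightarrow> wconn f S v ((f^^n) v)"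
proof (induction n)
  case 0 then show ?case by (auto intro: wconn_refl)
next
  case (Suc n)
  have "wconn f S v ((f^^n) v)" using Suc by auto
  moreover have "wconn f S ((f^^n) v) (f ((f^^n) v))"
    using Suc(2) by (intro wconn_step) auto
  ultimately show ?case by (auto intro: wconn_trans)
qed

lemma uconnectedI:
  assumes "r \<in> S" "\<forall>v\<in>S. wconn f S v r"
  shows "uconnected f S"
  unfolding uconnected_def
proof (intro ballI)
  fix u w assume "u \<in> S" "w \<in> S"
  then have "wconn f S u w" using assms wconn_sym wconn_trans by metis
  then obtain xs where W: "walk f S xs" "hd xs = u" "last xs = w" unfolding wconn_def by blast
  have P: "xs \<noteq> [] \<and> set xs \<subseteq> S \<and>
   (\<forall>i. Suc i < length xs \<longrightarrow> uadj f S (xs ! i) (xs ! Suc i))" by (rule walk_props[OF W(1)])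
  show "\<exists>xs. xs \<noteq> [] \<and> hd xs = u \<and> last xs = w \<and> set xs \<subseteq> S \<and>
      (\<forall>i. Suc i < length xs \<longrightarrow> uadj f S (xs ! i) (xs ! Suc i))"
    by (rule exI[of _ xs]) (use P W in simp)
qed

lemma uacyclicI:
  assumes "\<forall>v\<in>S. \<exists>n. (f^^n) v \<notin> S"
  shows "uacyclic f S"
proof -
  define d where "d v = (LEAST n. (f^^n) v \<notin> S)" for v
  have dS: "d v = Suc (d (f v))" if "v \<in> S" "f v \<in> S" for v
  proof -
    from bspec[OF assms that(1)] obtain n where "(f^^n) v \<notin> S" by blast
    from least_step[where P="\<lambda>x. x \<notin> S" and f=f and n=n and v=v, OF this] that(1)
    show ?thesis unfolding d_def by simp
  qed
  show ?thesis unfolding uacyclic_def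
  proof
    assume "\<exists>es xs. es \<noteq> [] \<and> distinct es \<and> set es \<subseteq> {v \<in> S. f v \<in> S} \<and>
      length xs = Suc (length es) \<and> hd xs = last xs \<and> distinct (butlast xs) \<and>
      (\<forall>i<length es. {es ! i, f (es ! i)} = {xs ! i, xs ! Suc i})"
    then obtain es xs where H: "es \<noteq> []" "distinct es" "set es \<subseteq> {v \<in> S. f v \<in> S}"
      "length xs = Suc (length es)" "hd xs = last xs"
      "\<forall>i<length es. {es ! i, f (es ! i)} = {xs ! i, xs ! Suc i}" by auto
    define n where "n = length es"
    have n0: "n > 0" using H(1) by (simp add: n_def)
    have xsne: "xs \<noteq> []" using H(4) by auto
    have xsn: "xs!n = xs!0"
      using H(4,5) xsne by (simp add: hd_conv_nth last_conv_nth n_def)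
    have eS: "es!i \<in> S \<and> f(es!i) \<in> S" if "i<n" for i
    proof -
      have "es!i \<in> set es" using that by (simp add: n_def)
      then show ?thesis using H(3) by auto
    qed
    have dstep: "d(es!i) = Suc (d (f(es!i)))" if "i<n" for i using dS eS[OF that] by simp
    have orient: "(xs!i = es!i \<and> xs!Suc i = f(es!i)) \<or> (xs!i = f(es!i) \<and> xs!Suc i = es!i)"
      if "i<n" for i
    proof -
      have "{es ! i, f (es ! i)} = {xs ! i, xs ! Suc i}" using H(6) that by (simp add: n_def)
      then show ?thesis unfolding doubleton_eq_iff by auto
    qed
    obtain i0 where i0: "i0 < n" "\<forall>i<n. d(xs!i) \<le> d(xs!i0)"
    proof -
      define m where "m = Max ((\<lambda>i. d(xs!i)) ` {..<n})"
      have "m \<in> (\<lambda>i. d(xs!i)) ` {..<n}" unfolding m_def using n0 by (intro Max_in) auto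
      then obtain i0 where "i0 < n" "m = d(xs!i0)" by auto
      moreover have "\<forall>i<n. d(xs!i) \<le> m" unfolding m_def by auto
      ultimately show ?thesis using that by auto
    qed
    have le_next: "d(xs!Suc i0) \<le> d(xs!i0)"
    proof (cases "Suc i0 < n")
      case True then show ?thesis using i0 by auto
    next
      case False then have "Suc i0 = n" using i0 by auto
      then show ?thesis using xsn i0 n0 by auto
    qed
    have e0: "es!i0 = xs!i0"
      using orient[OF i0(1)] le_next dstep[OF i0(1)] by auto
    define j where "j = (if i0 = 0 then n - 1 else i0 - 1)"
    have j: "j < n" "xs!Suc j = xs!i0" unfolding j_def using i0 n0 xsn by auto
    have ej: "es!j = xs!i0"
    proof -
      have "\<not> (xs!j = es!j \<and> xs!Suc j = f(es!j))"
      proof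
        assume a: "xs!j = es!j \<and> xs!Suc j = f(es!j)"
        have "d (xs!j) = Suc (d (xs!i0))" using a j(2) dstep[OF j(1)] by simp
        then show False using i0(2) j(1) by fastforce
      qed
      then show ?thesis using orient[OF j(1)] j(2) by auto
    qed
    show False
    proof (cases "j = i0")
      case True
      then have "f (es!i0) = es!i0" using orient[OF i0(1)] j(2) e0 by auto
      then show False using dstep[OF i0(1)] by simp
    next
      case False
      have "es!j = es!i0" using ej e0 by simp
      then show False using H(2) False j(1) i0(1) nth_eq_iff_index_eq unfolding n_def by blast
    qed
  qed
qed

lemma rooted_treeI:
  assumes "r \<in> S" "f r \<notin> S" "\<forall>v\<in>S. \<exists>n. (f^^n) v = r \<and> (\<forall>i\<le>n. (f^^i) v \<in> S)"
  shows "rooted_tree f S r"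
proof -
  have 1: "v = r" if "v \<in> S" "f v \<notin> S" for v
  proof -
    from bspec[OF assms(3) that(1)] obtain n where n: "(f^^n) v = r" "\<forall>i\<le>n. (f^^i) v \<in> S" by blast
    show ?thesis
    proof (cases n)
      case 0 then show ?thesis using n by simp
    next
      case (Suc k) then have "(f^^1) v \<in> S" using spec[OF n(2), of 1] by simp
      then show ?thesis using that by simp
    qed
  qed
  have 2: "\<forall>v\<in>S. wconn f S v r"
  proof
    fix v assume "v \<in> S"
    from bspec[OF assms(3) this] obtain n where n: "(f^^n) v = r" "\<forall>i\<le>n. (f^^i) v \<in> S" by blast
    have "wconn f S v ((f^^n) v)" by (rule wconn_path) (use n in simp)
    then show "wconn f S v r" using n by simp
  qed
  have 3: "\<forall>v\<in>S. \<exists>n. (f^^n) v \<notin> S"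
  proof
    fix v assume "v \<in> S"
    then obtain n where n: "(f^^n) v = r" using assms(3) by blast
    have "(f^^(Suc n)) v = f r" using n by simp
    then show "\<exists>n. (f^^n) v \<notin> S" using assms(2) by metis
  qed
  show ?thesis unfolding rooted_tree_def utree_def
    apply (intro conjI)
    using assms(1) apply simp
    using assms(2) apply simp
    using 1 apply simp
    using assms(3) apply simp
    using uconnectedI[OF assms(1) 2] apply simp
    using uacyclicI[OF 3] apply simp
    done
qed

lemma loc_torsion: assumes mod: "is_mod M pt f" and tor: "mod_torsion M pt f" and x: "x \<in> loc M f"
  shows "x = loc_pt M f pt"
proof -
  obtain m i where xm: "x = cls M f (m,i)" "m \<in> M" using x by (auto simp: loc_def)
  have "\<exists>n. (f^^n) m = pt" using tor xm(2) unfolding mod_torsion_def by blast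
  then show ?thesis using cls_pt_iff[OF mod xm(2)] xm(1) by simp
qed

lemma type1:
  assumes mod: "is_mod M pt f" and tor: "mod_torsion M pt f" and ind: "mod_indecomp M pt f"
  shows "graph_type1 M pt f"
proof -
  define S where "S = M - {pt}"
  define dd where "dd v = (LEAST n. (f^^n) v = pt)" for v
  define root where "root v = (f^^(dd v - 1)) v" for v
  have ptM: "pt \<in> M" using mod by (simp add: is_mod_def)
  have ex: "\<exists>n. (f^^n) v = pt" if "v \<in> M" for v using tor that unfolding mod_torsion_def by blast
  have P: "(f^^(dd v)) v = pt \<and> dd v > 0 \<and> (\<forall>i<dd v. (f^^i) v \<noteq> pt)" if vS: "v \<in> S" for v
  proof -
    have "v \<in> M" using vS by (simp add: S_def)
    then obtain n where n: "(f^^n) v = pt" using ex by blast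
    have nv: "\<not> v = pt" using vS by (simp add: S_def)
    note L = least_props[where P="\<lambda>x. x = pt" and f=f and n=n and v=v, OF n nv]
    show ?thesis unfolding dd_def using L by blast
  qed
  have path: "(f^^i) v \<in> S" if "v \<in> S" "i \<le> dd v - 1" for v i
  proof -
    have "i < dd v" using that P[OF that(1)] by auto
    then have "(f^^i) v \<noteq> pt" using P[OF that(1)] by blast
    moreover have "(f^^i) v \<in> M" using funpow_in[OF mod] that(1) by (simp add: S_def)
    ultimately show ?thesis by (simp add: S_def)
  qed
  have rootS: "root v \<in> S" if "v \<in> S" for v using path[OF that] by (simp add: root_def)
  have rootpt: "f (root v) = pt" if "v \<in> S" for v
  proof -
    have "Suc (dd v - 1) = dd v" using P[OF that] by simp
    then have "f (root v) = (f^^(dd v)) v" unfolding root_def by (metis funpow.simps(2) o_apply)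
    then show ?thesis using P[OF that] by simp
  qed
  have rootf: "root (f v) = root v" if "v \<in> S" "f v \<noteq> pt" for v
  proof -
    have "v \<in> M" using that by (simp add: S_def)
    then obtain n where n: "(f^^n) v = pt" using ex by blast
    have nv: "\<not> v = pt" using that by (simp add: S_def)
    have "dd v = Suc (dd (f v))" unfolding dd_def
      using least_step[where P="\<lambda>x. x = pt" and f=f and n=n and v=v, OF n nv] .
    moreover have fvS: "f v \<in> S" using that mod by (auto simp: S_def is_mod_def)
    ultimately have "dd v - 1 = Suc (dd (f v) - 1)" using P[OF fvS] by simp
    then show ?thesis unfolding root_def by (simp only: fSuc)
  qed
  have "M \<noteq> {pt}" using ind by (simp add: mod_indecomp_def)
  then obtain v0 where v0: "v0 \<in> S" using ptM by (auto simp: S_def)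
  define \<rho> where "\<rho> = root v0"
  define A where "A = insert pt {v\<in>S. root v = \<rho>}"
  define B where "B = insert pt {v\<in>S. root v \<noteq> \<rho>}"
  have fS': "f v \<in> S \<or> f v = pt" if "v \<in> S" for v using that mod by (auto simp: S_def is_mod_def)
  have mA: "is_mod A pt f" unfolding is_mod_def A_def using mod rootf fS'
    by (auto simp: is_mod_def)
  have mB: "is_mod B pt f" unfolding is_mod_def B_def using mod rootf fS'
    by (auto simp: is_mod_def)
  have sp: "mod_split M pt f A B" unfolding mod_split_def using mA mB ptM
    by (auto simp: A_def B_def S_def)
  have "A \<noteq> {pt}" using v0 by (auto simp: A_def \<rho>_def S_def)
  then have "B = {pt}" using ind sp unfolding mod_indecomp_def by blast
  then have all: "root v = \<rho>" if "v \<in> S" for v using that by (auto simp: B_def S_def)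
  have "rooted_tree f S \<rho>"
  proof (rule rooted_treeI)
    show "\<rho> \<in> S" using rootS[OF v0] by (simp add: \<rho>_def)
    show "f \<rho> \<notin> S" using rootpt[OF v0] by (simp add: \<rho>_def S_def)
    show "\<forall>v\<in>S. \<exists>n. (f ^^ n) v = \<rho> \<and> (\<forall>i\<le>n. (f ^^ i) v \<in> S)"
    proof
      fix v assume v: "v \<in> S"
      have "(f^^(dd v - 1)) v = \<rho>" using all[OF v] by (simp add: root_def)
      moreover have "\<forall>i\<le>dd v - 1. (f ^^ i) v \<in> S" using path[OF v] by blast
      ultimately show "\<exists>n. (f ^^ n) v = \<rho> \<and> (\<forall>i\<le>n. (f ^^ i) v \<in> S)" by blast
    qed
  qed
  then show ?thesis unfolding graph_type1_def S_def by blast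
qed

lemma meet:
  assumes mod: "is_mod M pt f" and ind: "mod_indecomp M pt f"
    and x: "x \<in> M" "x \<noteq> pt" and y: "y \<in> M" "y \<noteq> pt"
  shows "\<exists>a b. (f^^a) x = (f^^b) y"
proof -
  define A where "A = insert pt {y\<in>M. \<exists>a b. (f^^a) x = (f^^b) y}"
  define B where "B = insert pt {y\<in>M. \<not> (\<exists>a b. (f^^a) x = (f^^b) y)}"
  have ptM: "pt \<in> M" "f pt = pt" using mod by (auto simp: is_mod_def)
  have fM: "f y \<in> M" if "y \<in> M" for y using mod that by (auto simp: is_mod_def)
  have stepA: "\<exists>a b. (f^^a) x = (f^^b) (f y)" if "(f^^a) x = (f^^b) y" for a b y
  proof -
    have "(f^^(Suc a)) x = (f^^b) (f y)" using that by (simp add: fS)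
    then show ?thesis by blast
  qed
  have stepB: "\<exists>a b. (f^^a) x = (f^^b) y" if "(f^^a) x = (f^^b) (f y)" for a b y
  proof -
    have "(f^^a) x = (f^^(Suc b)) y" using that by (simp only: fSuc)
    then show ?thesis by blast
  qed
  have mA: "is_mod A pt f" unfolding is_mod_def A_def using ptM fM stepA by auto
  have mB: "is_mod B pt f" unfolding is_mod_def B_def using ptM fM stepB by blast
  have sp: "mod_split M pt f A B" unfolding mod_split_def using mA mB ptM
    by (auto simp: A_def B_def)
  have "x \<in> A" using x unfolding A_def by (auto intro: exI[of _ 0])
  then have "A \<noteq> {pt}" using x by auto
  then have "B = {pt}" using ind sp unfolding mod_indecomp_def by blast
  then show ?thesis using y unfolding B_def by blast
qed

definition clsset :: "'a set \<Rightarrow> ('a \<Rightarrow> 'a) \<Rightarrow> 'a set \<Rightarrow> ('a \<times> nat) set set" where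
  "clsset M f A = {cls M f (a,i) | a i. a \<in> A}"

lemma split_disj:
  assumes mod: "is_mod M pt f" and tf: "mod_torsion_free M pt f" and sp: "mod_split M pt f A B"
    and a: "a \<in> A" and b: "b \<in> B" and eq: "cls M f (a,i) = cls M f (b,j)"
  shows "a = pt \<and> b = pt"
proof -
  have mA: "is_mod A pt f" and mB: "is_mod B pt f" and U: "A \<union> B = M" and I: "A \<inter> B = {pt}"
    using sp by (auto simp: mod_split_def)
  have aM: "a \<in> M" and bM: "b \<in> M" using U a b by auto
  have "rel f (a,i) (b,j)" using cls_eq[OF aM bM] eq by simp
  then obtain k where k: "(f^^(k+j)) a = (f^^(k+i)) b" by (auto simp: rel_def)
  have "(f^^(k+j)) a \<in> A" using funpow_in[OF mA a] .
  moreover have "(f^^(k+i)) b \<in> B" using funpow_in[OF mB b] .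
  ultimately have "(f^^(k+j)) a = pt" "(f^^(k+i)) b = pt" using I k by auto
  then show ?thesis using tf aM bM unfolding mod_torsion_free_def by blast
qed

lemma fwd_pow_comm:
  assumes modM: "is_mod M pt f"
    and comm: "\<forall>x\<in>loc M f. loc_fwd N g (\<psi> x) = \<psi> (loc_bwd M f x)"
    and x: "x \<in> loc M f"
  shows "(loc_fwd N g ^^ j) (\<psi> x) = \<psi> ((loc_bwd M f ^^ j) x)"
proof (induction j)
  case 0 then show ?case by simp
next
  case (Suc j)
  have "((loc_bwd M f ^^ j) x) \<in> loc M f"
    by (induction j) (auto simp: x loc_bwd_in)
  then show ?case using Suc comm by simp
qed

lemma transfer_side:
  assumes modM: "is_mod M pt f" and modN: "is_mod N q g"
    and tfM: "mod_torsion_free M pt f"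
    and bij: "bij_betw \<psi> (loc M f) (loc N g)"
    and comm: "\<forall>x\<in>loc M f. loc_fwd N g (\<psi> x) = \<psi> (loc_bwd M f x)"
    and sp: "mod_split M pt f A B"
  shows "\<forall>x\<in>loc M f. x \<in> clsset M f A \<longleftrightarrow>
            \<psi> x \<in> clsset N g {b\<in>N. cls N g (b,0) \<in> \<psi> ` clsset M f A}"
proof
  fix x assume x: "x \<in> loc M f"
  define A2 where "A2 = {b\<in>N. cls N g (b,0) \<in> \<psi> ` clsset M f A}"
  have U: "A \<union> B = M" and mA: "is_mod A pt f" using sp by (auto simp: mod_split_def)
  have "\<psi> x \<in> loc N g" using bij x by (auto simp: bij_betw_def)
  then obtain b j where bj: "\<psi> x = cls N g (b,j)" "b \<in> N" by (auto simp: loc_def)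
  have key: "cls N g (b,0) = \<psi> ((loc_bwd M f ^^ j) x)"
  proof -
    have "cls N g (b,0) = cls N g ((g^^j) b, j)" using cls_shift[OF modN bj(2), of 0 j] by simp
    also have "\<dots> = (loc_fwd N g ^^ j) (cls N g (b,j))" using loc_fwd_pow[OF modN bj(2)] by simp
    also have "\<dots> = \<psi> ((loc_bwd M f ^^ j) x)" using fwd_pow_comm[OF modM comm x] bj(1) by simp
    finally show ?thesis .
  qed
  show "x \<in> clsset M f A \<longleftrightarrow> \<psi> x \<in> clsset N g A2"
  proof
    assume "x \<in> clsset M f A"
    then obtain a i where ai: "x = cls M f (a,i)" "a \<in> A" by (auto simp: clsset_def)
    have aM: "a \<in> M" using U ai by auto
    have "(loc_bwd M f ^^ j) x = cls M f (a, i+j)" using loc_bwd_pow[OF aM] ai by simp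
    then have "cls N g (b,0) \<in> \<psi> ` clsset M f A" using key ai(2) by (auto simp: clsset_def)
    then have "b \<in> A2" using bj(2) by (simp add: A2_def)
    then show "\<psi> x \<in> clsset N g A2" using bj(1) by (auto simp: clsset_def)
  next
    assume "\<psi> x \<in> clsset N g A2"
    then obtain b' j' where bj': "\<psi> x = cls N g (b',j')" "b' \<in> A2" by (auto simp: clsset_def)
    have b'N: "b' \<in> N" using bj' by (simp add: A2_def)
    obtain y where y: "y \<in> clsset M f A" "cls N g (b',0) = \<psi> y" using bj'(2) by (auto simp: A2_def)
    have key': "cls N g (b',0) = \<psi> ((loc_bwd M f ^^ j') x)"
    proof -
      have "cls N g (b',0) = cls N g ((g^^j') b', j')" using cls_shift[OF modN b'N, of 0 j'] by simp
      also have "\<dots> = (loc_fwd N g ^^ j') (cls N g (b',j'))" using loc_fwd_pow[OF modN b'N] by simp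
      also have "\<dots> = \<psi> ((loc_bwd M f ^^ j') x)" using fwd_pow_comm[OF modM comm x] bj'(1) by simp
      finally show ?thesis .
    qed
    obtain c l where cl: "x = cls M f (c,l)" "c \<in> M" using x by (auto simp: loc_def)
    have in1: "(loc_bwd M f ^^ j') x = cls M f (c, l+j')" using loc_bwd_pow[OF cl(2)] cl(1) by simp
    obtain a i where ai: "y = cls M f (a,i)" "a \<in> A" using y(1) by (auto simp: clsset_def)
    have aM: "a \<in> M" using U ai by auto
    have "y \<in> loc M f" using ai aM by (simp add: loc_cls)
    moreover have "(loc_bwd M f ^^ j') x \<in> loc M f" using in1 cl(2) by (simp add: loc_cls)
    moreover have "\<psi> y = \<psi> ((loc_bwd M f ^^ j') x)" using y(2) key' by simp
    ultimately have eq: "cls M f (a,i) = cls M f (c, l+j')"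
      using bij ai in1 unfolding bij_betw_def inj_on_def by metis
    show "x \<in> clsset M f A"
    proof (cases "c \<in> A")
      case True then show ?thesis using cl by (auto simp: clsset_def)
    next
      case False
      then have "c \<in> B" using U cl(2) by auto
      then have "c = pt" using split_disj[OF modM tfM sp ai(2) _ eq] by blast
      moreover have "pt \<in> A" using mA by (simp add: is_mod_def)
      ultimately show ?thesis using False by simp
    qed
  qed
qed

lemma lmod_iso_inv:
  assumes h: "lmod_iso N1 p1 s1 N2 p2 s2 h" and p1: "p1 \<in> N1" and cl: "\<forall>x\<in>N1. s1 x \<in> N1"
  shows "lmod_iso N2 p2 s2 N1 p1 s1 (inv_into N1 h)"
proof -
  have b: "bij_betw h N1 N2" and hp: "h p1 = p2" and c: "\<forall>x\<in>N1. h (s1 x) = s2 (h x)"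
    using h by (auto simp: lmod_iso_def)
  have "bij_betw (inv_into N1 h) N2 N1" using b by (rule bij_betw_inv_into)
  moreover have "inv_into N1 h p2 = p1" using hp p1 b by (metis bij_betw_imp_inj_on inv_into_f_f)
  moreover have "inv_into N1 h (s2 y) = s1 (inv_into N1 h y)" if y: "y \<in> N2" for y
  proof -
    obtain x where x: "x \<in> N1" "y = h x" using y b by (auto simp: bij_betw_def)
    have "inv_into N1 h (s2 y) = inv_into N1 h (h (s1 x))" using c x by simp
    also have "\<dots> = s1 x" using cl x b by (meson bij_betw_imp_inj_on inv_into_f_f)
    also have "\<dots> = s1 (inv_into N1 h y)" using x b by (metis bij_betw_imp_inj_on inv_into_f_f)
    finally show ?thesis .
  qed
  ultimately show ?thesis unfolding lmod_iso_def by blast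
qed

lemma L_iso:
  assumes E: "\<forall>e e'. E e = E e' \<longleftrightarrow> e = e'" and ptE: "\<forall>e. E e \<noteq> pt"
    and N: "N = insert pt (range E)" and s: "\<forall>e. \<sigma> (E e) = E (e+1)" and spt: "\<sigma> pt = pt"
  shows "lmod_iso L_car None L_t N pt \<sigma> (\<lambda>x. case x of None \<Rightarrow> pt | Some j \<Rightarrow> E j)"
proof -
  let ?h = "\<lambda>x. case x of None \<Rightarrow> pt | Some j \<Rightarrow> E j"
  have "inj ?h"
  proof (rule injI)
    fix x y assume xy: "?h x = ?h y"
    have pE: "pt \<noteq> E e" for e using ptE by metis
    show "x = y" using xy E ptE pE by (cases x; cases y) simp_all
  qed
  moreover have "?h ` UNIV = N" unfolding N
  proof (rule set_eqI, rule iffI)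
    fix y assume "y \<in> range ?h" then show "y \<in> insert pt (range E)" by (auto split: option.splits)
  next
    fix y assume "y \<in> insert pt (range E)"
    then show "y \<in> range ?h"
    proof
      assume "y = pt" then show ?thesis by (metis (no_types, lifting) option.simps(4) rangeI)
    next
      assume "y \<in> range E" then obtain e where "y = E e" by auto
      then show ?thesis by (metis (no_types, lifting) option.simps(5) rangeI)
    qed
  qed
  ultimately have "bij_betw ?h L_car N" unfolding L_car_def bij_betw_def by simp
  moreover have "\<forall>x\<in>L_car. ?h (L_t x) = \<sigma> (?h x)"
    using s spt by (auto simp: L_t_def split: option.splits)
  ultimately show ?thesis unfolding lmod_iso_def by simp
qed

lemma C_iso:
  assumes k: "k \<ge> 1" and E: "\<forall>e e'. E e = E e' \<longleftrightarrow> int k dvd (e - e')" and ptE: "\<forall>e. E e \<noteq> pt"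
    and N: "N = insert pt (range E)" and s: "\<forall>e. \<sigma> (E e) = E (e+1)" and spt: "\<sigma> pt = pt"
  shows "lmod_iso (C_car k) None (C_t k) N pt \<sigma> (\<lambda>x. case x of None \<Rightarrow> pt | Some j \<Rightarrow> E j)"
proof -
  let ?h = "\<lambda>x. case x of None \<Rightarrow> pt | Some j \<Rightarrow> E j"
  have Emod: "E (e mod int k) = E e" for e using E by (simp add: mod_eq_dvd_iff[symmetric])
  have "inj_on ?h (C_car k)"
  proof (rule inj_onI)
    fix x y assume xy: "x \<in> C_car k" "y \<in> C_car k" "?h x = ?h y"
    show "x = y"
    proof (cases x; cases y)
      fix a b assume ab: "x = Some a" "y = Some b"
      then have "E a = E b" using xy by simp
      then have "int k dvd a - b" using E by blast
      then have "a mod int k = b mod int k" by (simp add: mod_eq_dvd_iff)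
      moreover have "0 \<le> a" "a < int k" "0 \<le> b" "b < int k" using xy ab by (auto simp: C_car_def)
      ultimately show "x = y" using ab by simp
    qed (use xy ptE in auto)
  qed
  moreover have "?h ` C_car k = N" unfolding N
  proof (rule set_eqI, rule iffI)
    fix y assume "y \<in> ?h ` C_car k" then show "y \<in> insert pt (range E)"
      by (auto split: option.splits)
  next
    fix y assume "y \<in> insert pt (range E)"
    then show "y \<in> ?h ` C_car k"
    proof
      assume "y = pt" then show ?thesis by (force simp: C_car_def)
    next
      assume "y \<in> range E" then obtain e where e: "y = E e" by auto
      have "e mod int k \<in> {0..<int k}" using k by simp
      then have "Some (e mod int k) \<in> C_car k" by (simp add: C_car_def)
      moreover have "?h (Some (e mod int k)) = y" using e Emod by simp
      ultimately show ?thesis by force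
    qed
  qed
  ultimately have "bij_betw ?h (C_car k) N" unfolding bij_betw_def by simp
  moreover have "\<forall>x\<in>C_car k. ?h (C_t k x) = \<sigma> (?h x)"
    using s spt Emod by (auto simp: C_t_def split: option.splits)
  ultimately show ?thesis unfolding lmod_iso_def by simp
qed

lemma L_aut:
  assumes g: "lmod_iso L_car None L_t L_car None L_t \<gamma>"
  shows "\<exists>n. \<forall>x. \<gamma> x = phiL n x"
proof -
  have b: "bij_betw \<gamma> UNIV UNIV" and g0: "\<gamma> None = None" and c: "\<forall>x. \<gamma> (L_t x) = L_t (\<gamma> x)"
    using g by (auto simp: lmod_iso_def L_car_def)
  have "\<gamma> (Some 0) \<noteq> None" using b g0 unfolding bij_betw_def inj_on_def by (metis option.distinct(1) UNIV_I)
  then obtain n where n: "\<gamma> (Some 0) = Some n" by auto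
  have up: "\<gamma> (Some (j+1)) = map_option (\<lambda>i. i+1) (\<gamma> (Some j))" for j
    using c[rule_format, of "Some j"] by (simp add: L_t_def)
  have "\<gamma> (Some (int m)) = Some (int m + n) \<and> \<gamma> (Some (- int m)) = Some (- int m + n)" for m
  proof (induction m)
    case 0 then show ?case using n by simp
  next
    case (Suc m)
    have 1: "\<gamma> (Some (int (Suc m))) = Some (int (Suc m) + n)"
      using up[of "int m"] Suc by (simp add: algebra_simps)
    have "map_option (\<lambda>i. i+1) (\<gamma> (Some (- int (Suc m)))) = Some (- int m + n)"
      using up[of "- int (Suc m)"] Suc by simp
    then have 2: "\<gamma> (Some (- int (Suc m))) = Some (- int (Suc m) + n)" by auto
    show ?case using 1 2 by simp
  qed
  then have "\<gamma> (Some j) = Some (j + n)" for j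
    by (cases "j \<ge> 0") (metis nonneg_int_cases, metis add.inverse_inverse neg_0_le_iff_le nonneg_int_cases le_cases)
  then have "\<gamma> x = phiL n x" for x using g0 by (cases x) (auto simp: phiL_def)
  then show ?thesis by blast
qed

lemma C_aut:
  assumes g: "lmod_iso (C_car k) None (C_t k) (C_car k) None (C_t k) \<gamma>" and k: "k \<ge> 1"
  shows "\<exists>m. \<forall>x\<in>C_car k. \<gamma> x = psiC k m x"
proof -
  have b: "bij_betw \<gamma> (C_car k) (C_car k)" and g0: "\<gamma> None = None"
    and c: "\<forall>x\<in>C_car k. \<gamma> (C_t k x) = C_t k (\<gamma> x)"
    using g by (auto simp: lmod_iso_def)
  have S0: "Some 0 \<in> C_car k" using k by (simp add: C_car_def)
  have NC: "None \<in> C_car k" by (simp add: C_car_def)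
  have "\<gamma> (Some 0) \<noteq> None" using b g0 S0 NC unfolding bij_betw_def inj_on_def by (metis option.distinct(1))
  moreover have "\<gamma> (Some 0) \<in> C_car k" using b S0 by (auto simp: bij_betw_def)
  ultimately obtain m where m: "\<gamma> (Some 0) = Some m" by (auto simp: C_car_def)
  have "\<gamma> (Some (int j)) = Some ((int j + m) mod int k)" if "j < k" for j
    using that
  proof (induction j)
    case 0
    have "m \<in> {0..<int k}" using m \<open>\<gamma> (Some 0) \<in> C_car k\<close> by (auto simp: C_car_def)
    then show ?case using m by simp
  next
    case (Suc j)
    have jC: "Some (int j) \<in> C_car k" using Suc by (simp add: C_car_def)
    have "C_t k (Some (int j)) = Some (int (Suc j))" using Suc by (simp add: C_t_def)
    then have "\<gamma> (Some (int (Suc j))) = C_t k (\<gamma> (Some (int j)))" using c jC by metis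
    also have "\<dots> = Some (((int j + m) mod int k + 1) mod int k)" using Suc by (simp add: C_t_def)
    also have "\<dots> = Some ((int (Suc j) + m) mod int k)" by (simp add: mod_add_right_eq add.commute add.left_commute)
    finally show ?case .
  qed
  note cl = this
  have "\<gamma> x = psiC k m x" if x: "x \<in> C_car k" for x
  proof (cases x)
    case None then show ?thesis using g0 by (simp add: psiC_def)
  next
    case (Some j)
    then have j: "0 \<le> j" "j < int k" using x by (auto simp: C_car_def)
    then have "nat j < k" by simp
    from cl[OF this] show ?thesis using Some j by (simp add: psiC_def add.commute)
  qed
  then show ?thesis by blast
qed

lemma card_C: "card (C_car k) = Suc k"
proof -
  have "card (Some ` {0..<int k}) = k" by (simp add: card_image)
  then show ?thesis unfolding C_car_def by (simp add: card_insert_if)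
qed

lemma finite_C: "finite (C_car k)" by (simp add: C_car_def)

lemma infinite_L: "infinite L_car"
proof
  assume "finite L_car"
  then have "finite (range (Some :: int \<Rightarrow> int option))" unfolding L_car_def by (rule finite_subset[rotated]) auto
  then have "finite (UNIV :: int set)" using finite_imageD[of Some "UNIV :: int set"] by (simp add: inj_on_def)
  then show False by (simp add: infinite_UNIV_int)
qed

lemma nat_mod_dvd: "(A::nat) mod k = B mod k \<longleftrightarrow> int k dvd int A - int B"
proof -
  have "A mod k = B mod k \<longleftrightarrow> int (A mod k) = int (B mod k)" by simp
  also have "\<dots> \<longleftrightarrow> int A mod int k = int B mod int k" by (simp only: zmod_int)
  also have "\<dots> \<longleftrightarrow> int k dvd int A - int B" by (rule mod_eq_dvd_iff)
  finally show ?thesis .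
qed

lemma per_mod: assumes "(f^^k) c = c" shows "(f^^a) c = (f^^(a mod k)) c"
proof -
  have q: "(f^^(q*k)) c = c" for q
  proof (induction q)
    case 0 then show ?case by simp
  next
    case (Suc q)
    have "(f^^(Suc q * k)) c = (f^^k) ((f^^(q*k)) c)" by (simp add: fpa[symmetric])
    then show ?case using Suc assms by simp
  qed
  have "(f^^a) c = (f^^(a mod k + (a div k) * k)) c" by simp
  also have "\<dots> = (f^^(a mod k)) ((f^^((a div k) * k)) c)" by (rule fpa)
  also have "\<dots> = (f^^(a mod k)) c" using q by simp
  finally show ?thesis .
qed

lemma per_least:
  assumes p: "p > 0" "(f^^p) c = c"
  defines "k \<equiv> (LEAST p. p > 0 \<and> (f^^p) c = c)"
  shows "k > 0" "(f^^k) c = c" "\<forall>a b. (f^^a) c = (f^^b) c \<longleftrightarrow> a mod k = b mod k"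
proof -
  have kp: "k > 0 \<and> (f^^k) c = c" unfolding k_def by (rule LeastI[of _ p]) (use p in simp)
  then show "k > 0" "(f^^k) c = c" by auto
  have no: False if rs: "r < s" "s < k" "(f^^r) c = (f^^s) c" for r s
  proof -
    have "(f^^(k - s + r)) c = (f^^(k-s)) ((f^^r) c)" by (simp add: fpa[symmetric])
    also have "\<dots> = (f^^(k-s)) ((f^^s) c)" using rs by simp
    also have "\<dots> = (f^^k) c" using rs by (simp add: fpa[symmetric])
    also have "\<dots> = c" using kp by simp
    finally have "(f^^(k - s + r)) c = c" .
    moreover have "k - s + r < k" "k - s + r > 0" using rs by auto
    ultimately show False using not_less_Least[of "k - s + r" "\<lambda>p. p > 0 \<and> (f^^p) c = c"]
      unfolding k_def by blast
  qed
  show "\<forall>a b. (f^^a) c = (f^^b) c \<longleftrightarrow> a mod k = b mod k"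
  proof (intro allI iffI)
    fix a b assume ab: "(f^^a) c = (f^^b) c"
    have e: "(f^^(a mod k)) c = (f^^(b mod k)) c" using ab per_mod[where f=f and k=k and c=c] kp by metis
    have "a mod k < k" "b mod k < k" using kp by auto
    then show "a mod k = b mod k" using no e by (metis linorder_neqE_nat)
  next
    fix a b assume "a mod k = b mod k"
    then show "(f^^a) c = (f^^b) c" using per_mod[where f=f and k=k and c=c] kp by metis
  qed
qed

lemma nonper:
  assumes mod: "is_mod M pt f" and tf: "mod_torsion_free M pt f"
    and np: "\<forall>x\<in>M-{pt}. \<forall>p>0. (f^^p) x \<noteq> x" and c: "c \<in> M" "c \<noteq> pt"
  shows "\<forall>a b. (f^^a) c = (f^^b) c \<longleftrightarrow> a mod 0 = b mod 0"
proof (intro allI)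
  fix a b
  have no: False if ab: "a' < b'" "(f^^a') c = (f^^b') c" for a' b'
  proof -
    define x where "x = (f^^a') c"
    have xM: "x \<in> M" using funpow_in[OF mod c(1)] by (simp add: x_def)
    have xpt: "x \<noteq> pt"
    proof
      assume "x = pt" then have "\<exists>n. (f^^n) c = pt" by (auto simp: x_def)
      then show False using tf c unfolding mod_torsion_free_def by blast
    qed
    have "(f^^(b' - a')) x = (f^^(b' - a' + a')) c" unfolding x_def by (simp only: fpa)
    then have "(f^^(b' - a')) x = (f^^b') c" using ab by simp
    then have "(f^^(b' - a')) x = x" using ab by (simp add: x_def)
    then show False using np xM xpt ab by auto
  qed
  show "(f^^a) c = (f^^b) c \<longleftrightarrow> a mod 0 = b mod 0"
  proof (cases a b rule: linorder_cases)
    case less then show ?thesis using no[OF less] by auto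
  next
    case equal then show ?thesis by simp
  next
    case greater then show ?thesis using no[OF greater] by auto
  qed
qed

locale orb =
  fixes M pt f c k
  assumes mod: "is_mod M pt f" and tf: "mod_torsion_free M pt f"
    and cM: "c \<in> M" and cpt: "c \<noteq> pt"
    and per: "\<forall>a b. (f^^a) c = (f^^b) c \<longleftrightarrow> a mod k = b mod k"
begin

definition F :: "nat \<Rightarrow> nat \<Rightarrow> ('a \<times> nat) set" where
  "F a b = cls M f ((f^^a) c, b)"

definition E :: "int \<Rightarrow> ('a \<times> nat) set" where
  "E e = F (nat e) (nat (-e))"

lemma F_eq: "F a b = F a' b' \<longleftrightarrow> int k dvd (int a + int b') - (int a' + int b)"
proof -
  have M1: "(f^^a) c \<in> M" "(f^^a') c \<in> M" using funpow_in[OF mod cM] by auto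
  have "F a b = F a' b' \<longleftrightarrow> rel f ((f^^a) c, b) ((f^^a') c, b')"
    unfolding F_def by (rule cls_eq[OF M1])
  also have "\<dots> \<longleftrightarrow> (\<exists>K. (f^^(K+b')) ((f^^a) c) = (f^^(K+b)) ((f^^a') c))"
    by (simp add: rel_def)
  also have "\<dots> \<longleftrightarrow> (\<exists>K. (f^^(K+b'+a)) c = (f^^(K+b+a')) c)"
    by (simp add: fpa[symmetric] add.assoc)
  also have "\<dots> \<longleftrightarrow> (\<exists>K. (K+b'+a) mod k = (K+b+a') mod k)" using per by simp
  also have "\<dots> \<longleftrightarrow> (\<exists>K::nat. int k dvd int (K+b'+a) - int (K+b+a'))" by (simp only: nat_mod_dvd)
  also have "\<dots> \<longleftrightarrow> int k dvd (int a + int b') - (int a' + int b)"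
    by (simp add: algebra_simps)
  finally show ?thesis .
qed

lemma E_eq: "E e = E e' \<longleftrightarrow> int k dvd e - e'"
proof -
  have "(int (nat e) + int (nat (-e'))) - (int (nat e') + int (nat (-e))) = e - e'" by simp
  then show ?thesis unfolding E_def F_eq by simp
qed

lemma F_E: "F a b = E (int a - int b)"
  unfolding E_def F_eq by simp

lemma E_pt: "E e \<noteq> loc_pt M f pt"
proof
  assume "E e = loc_pt M f pt"
  then have "\<exists>n. (f^^n) ((f^^(nat e)) c) = pt"
    using cls_pt_iff[OF mod funpow_in[OF mod cM]] unfolding E_def F_def by blast
  then obtain n where "(f^^(n + nat e)) c = pt" by (auto simp: fpa)
  then show False using tf cM cpt unfolding mod_torsion_free_def by blast
qed

lemma E_fwd: "loc_fwd M f (E e) = E (e+1)"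
proof -
  have "loc_fwd M f (E e) = cls M f (f ((f^^(nat e)) c), nat (-e))"
    unfolding E_def F_def by (rule loc_fwd_cls[OF mod funpow_in[OF mod cM]])
  also have "\<dots> = F (Suc (nat e)) (nat (-e))" unfolding F_def by simp
  also have "\<dots> = E (e+1)" unfolding F_E
  proof -
    have "int (Suc (nat e)) - int (nat (-e)) = e + 1" by arith
    then show "E (int (Suc (nat e)) - int (nat (-e))) = E (e+1)" by (simp only:)
  qed
  finally show ?thesis .
qed

lemma E_bwd: "loc_bwd M f (E e) = E (e-1)"
proof -
  have "loc_bwd M f (E e) = F (nat e) (Suc (nat (-e)))"
    unfolding E_def F_def by (rule loc_bwd_cls[OF funpow_in[OF mod cM]])
  also have "\<dots> = E (e-1)" unfolding F_E
  proof -
    have "int (nat e) - int (Suc (nat (-e))) = e - 1" by arith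
    then show "E (int (nat e) - int (Suc (nat (-e)))) = E (e-1)" by (simp only:)
  qed
  finally show ?thesis .
qed

lemma loc_fwd_pt: "loc_fwd M f (loc_pt M f pt) = loc_pt M f pt"
proof -
  have ptM: "pt \<in> M" "f pt = pt" using mod by (auto simp: is_mod_def)
  show ?thesis unfolding loc_pt_def using loc_fwd_cls[OF mod ptM(1)] ptM by simp
qed

lemma loc_bwd_pt: "loc_bwd M f (loc_pt M f pt) = loc_pt M f pt"
proof -
  have ptM: "pt \<in> M" using mod by (auto simp: is_mod_def)
  have "loc_bwd M f (loc_pt M f pt) = cls M f (pt, 1)"
    unfolding loc_pt_def using loc_bwd_cls[OF ptM] by simp
  also have "\<dots> = loc_pt M f pt" using cls_pt_iff[OF mod ptM] by (metis funpow_0)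
  finally show ?thesis .
qed

lemma E_range:
  assumes ind: "mod_indecomp M pt f"
  shows "loc M f = insert (loc_pt M f pt) (range E)"
proof (rule set_eqI, rule iffI)
  fix x assume x: "x \<in> loc M f"
  then obtain m i where mi: "x = cls M f (m,i)" "m \<in> M" by (auto simp: loc_def)
  show "x \<in> insert (loc_pt M f pt) (range E)"
  proof (cases "m = pt")
    case True
    have "\<exists>n. (f^^n) m = pt" using True by (metis funpow_0)
    then have "x = loc_pt M f pt" using cls_pt_iff[OF mod mi(2), of i] mi(1) by simp
    then show ?thesis by simp
  next
    case False
    obtain a b where ab: "(f^^a) m = (f^^b) c" using meet[OF mod ind mi(2) False cM cpt] by blast
    have "x = cls M f ((f^^a) m, i + a)" using cls_shift[OF mod mi(2)] mi(1) by blast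
    also have "\<dots> = F b (i+a)" using ab by (simp add: F_def)
    also have "\<dots> = E (int b - int (i+a))" by (rule F_E)
    finally show ?thesis by simp
  qed
next
  fix x assume "x \<in> insert (loc_pt M f pt) (range E)"
  then show "x \<in> loc M f"
  proof
    assume "x = loc_pt M f pt" then show ?thesis using loc_pt_in[OF mod] by simp
  next
    assume "x \<in> range E"
    then obtain e where "x = E e" by auto
    then show ?thesis unfolding E_def F_def by (simp add: loc_cls funpow_in[OF mod cM])
  qed
qed

end

lemma L_t_cl: "\<forall>x\<in>L_car. L_t x \<in> L_car" by (simp add: L_car_def)
lemma C_t_cl: "k \<ge> 1 \<Longrightarrow> \<forall>x\<in>C_car k. C_t k x \<in> C_car k"
  by (auto simp: C_car_def C_t_def)

context orb begin

lemma iso_L: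
  assumes ind: "mod_indecomp M pt f" and k0: "k = 0"
  shows "\<exists>\<alpha>. lmod_iso (loc M f) (loc_pt M f pt) (loc_fwd M f) L_car None L_t \<alpha>"
    "\<exists>\<alpha>. lmod_iso (loc M f) (loc_pt M f pt) (loc_bwd M f) L_car None L_t \<alpha>"
proof -
  have Eq: "\<forall>e e'. E e = E e' \<longleftrightarrow> e = e'" using E_eq k0 by simp
  have h1: "lmod_iso L_car None L_t (loc M f) (loc_pt M f pt) (loc_fwd M f)
      (\<lambda>x. case x of None \<Rightarrow> loc_pt M f pt | Some j \<Rightarrow> E j)"
  proof (rule L_iso[where E=E])
    show "\<forall>e e'. (E e = E e') = (e = e')" by (rule Eq)
    show "\<forall>e. E e \<noteq> loc_pt M f pt" using E_pt by simp
    show "loc M f = insert (loc_pt M f pt) (range E)" by (rule E_range[OF ind])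
    show "\<forall>e. loc_fwd M f (E e) = E (e + 1)" using E_fwd by simp
    show "loc_fwd M f (loc_pt M f pt) = loc_pt M f pt" by (rule loc_fwd_pt)
  qed
  show "\<exists>\<alpha>. lmod_iso (loc M f) (loc_pt M f pt) (loc_fwd M f) L_car None L_t \<alpha>"
    using lmod_iso_inv[OF h1 _ L_t_cl] by (auto simp: L_car_def)
  have R: "range (\<lambda>e. E (-e)) = range E"
  proof
    show "range (\<lambda>e. E (-e)) \<subseteq> range E" by auto
    show "range E \<subseteq> range (\<lambda>e. E (-e))"
    proof
      fix y assume "y \<in> range E" then obtain e where "y = E e" by auto
      then have "y = E (- (- e))" by simp
      then show "y \<in> range (\<lambda>e. E (-e))" by blast
    qed
  qed
  have h2: "lmod_iso L_car None L_t (loc M f) (loc_pt M f pt) (loc_bwd M f)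
      (\<lambda>x. case x of None \<Rightarrow> loc_pt M f pt | Some j \<Rightarrow> E (-j))"
  proof (rule L_iso[where E="\<lambda>e. E (-e)"])
    show "\<forall>e e'. (E (- e) = E (- e')) = (e = e')" using Eq by simp
    show "\<forall>e. E (- e) \<noteq> loc_pt M f pt" using E_pt by simp
    show "loc M f = insert (loc_pt M f pt) (range (\<lambda>e. E (- e)))" using E_range[OF ind] R by simp
    show "\<forall>e. loc_bwd M f (E (- e)) = E (- (e + 1))" using E_bwd by (simp add: algebra_simps)
    show "loc_bwd M f (loc_pt M f pt) = loc_pt M f pt" by (rule loc_bwd_pt)
  qed
  show "\<exists>\<alpha>. lmod_iso (loc M f) (loc_pt M f pt) (loc_bwd M f) L_car None L_t \<alpha>"
    using lmod_iso_inv[OF h2 _ L_t_cl] by (auto simp: L_car_def)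
qed

lemma iso_C:
  assumes ind: "mod_indecomp M pt f" and k1: "k \<ge> 1"
  shows "\<exists>\<alpha>. lmod_iso (loc M f) (loc_pt M f pt) (loc_fwd M f) (C_car k) None (C_t k) \<alpha>"
    "\<exists>\<alpha>. lmod_iso (loc M f) (loc_pt M f pt) (loc_bwd M f) (C_car k) None (C_t k) \<alpha>"
proof -
  have Eq: "\<forall>e e'. E e = E e' \<longleftrightarrow> int k dvd e - e'" using E_eq by simp
  have NC: "None \<in> C_car k" by (simp add: C_car_def)
  have h1: "lmod_iso (C_car k) None (C_t k) (loc M f) (loc_pt M f pt) (loc_fwd M f)
      (\<lambda>x. case x of None \<Rightarrow> loc_pt M f pt | Some j \<Rightarrow> E j)"
  proof (rule C_iso[OF k1, where E=E])
    show "\<forall>e e'. (E e = E e') = (int k dvd e - e')" by (rule Eq)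
    show "\<forall>e. E e \<noteq> loc_pt M f pt" using E_pt by simp
    show "loc M f = insert (loc_pt M f pt) (range E)" by (rule E_range[OF ind])
    show "\<forall>e. loc_fwd M f (E e) = E (e + 1)" using E_fwd by simp
    show "loc_fwd M f (loc_pt M f pt) = loc_pt M f pt" by (rule loc_fwd_pt)
  qed
  show "\<exists>\<alpha>. lmod_iso (loc M f) (loc_pt M f pt) (loc_fwd M f) (C_car k) None (C_t k) \<alpha>"
    using lmod_iso_inv[OF h1 NC C_t_cl[OF k1]] by blast
  have R: "range (\<lambda>e. E (-e)) = range E"
  proof
    show "range (\<lambda>e. E (-e)) \<subseteq> range E" by auto
    show "range E \<subseteq> range (\<lambda>e. E (-e))"
    proof
      fix y assume "y \<in> range E" then obtain e where "y = E e" by auto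
      then have "y = E (- (- e))" by simp
      then show "y \<in> range (\<lambda>e. E (-e))" by blast
    qed
  qed
  have h2: "lmod_iso (C_car k) None (C_t k) (loc M f) (loc_pt M f pt) (loc_bwd M f)
      (\<lambda>x. case x of None \<Rightarrow> loc_pt M f pt | Some j \<Rightarrow> E (-j))"
  proof (rule C_iso[OF k1, where E="\<lambda>e. E (-e)"])
    show "\<forall>e e'. (E (- e) = E (- e')) = (int k dvd e - e')"
    proof (intro allI)
      fix e e' :: int
      have "(-e) - (-e') = - (e - e')" by simp
      then have "int k dvd (-e) - (-e') \<longleftrightarrow> int k dvd e - e'" by (simp only: dvd_minus_iff)
      then show "(E (- e) = E (- e')) = (int k dvd e - e')" using Eq by simp
    qed
    show "\<forall>e. E (- e) \<noteq> loc_pt M f pt" using E_pt by simp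
    show "loc M f = insert (loc_pt M f pt) (range (\<lambda>e. E (- e)))" using E_range[OF ind] R by simp
    show "\<forall>e. loc_bwd M f (E (- e)) = E (- (e + 1))" using E_bwd by (simp add: algebra_simps)
    show "loc_bwd M f (loc_pt M f pt) = loc_pt M f pt" by (rule loc_bwd_pt)
  qed
  show "\<exists>\<alpha>. lmod_iso (loc M f) (loc_pt M f pt) (loc_bwd M f) (C_car k) None (C_t k) \<alpha>"
    using lmod_iso_inv[OF h2 NC C_t_cl[OF k1]] by blast
qed

end

lemma tree_part:
  assumes mod: "is_mod M pt f" and tf: "mod_torsion_free M pt f"
    and Q: "Q \<subseteq> M - {pt}" and enter: "\<forall>x\<in>M-{pt}. \<exists>n. (f^^n) x \<in> Q"
  shows "\<exists>rt. \<forall>x\<in>M - {pt} - Q. rt x \<in> M - {pt} - Q \<and> f (rt x) \<in> Q \<and>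
            rooted_tree f {y\<in>M - {pt} - Q. rt y = rt x} (rt x)"
proof -
  define D where "D = M - {pt} - Q"
  define dC where "dC x = (LEAST n. (f^^n) x \<in> Q)" for x
  define rt where "rt x = (f^^(dC x - 1)) x" for x
  have P: "(f^^(dC x)) x \<in> Q \<and> dC x > 0 \<and> (\<forall>i<dC x. (f^^i) x \<notin> Q)" if xD: "x \<in> D" for x
  proof -
    have "x \<in> M - {pt}" using xD by (simp add: D_def)
    then obtain n where n: "(f^^n) x \<in> Q" using enter by blast
    have nx: "\<not> x \<in> Q" using xD by (simp add: D_def)
    note L = least_props[where P="\<lambda>x. x \<in> Q" and f=f and n=n and v=x, OF n nx]
    show ?thesis unfolding dC_def using L by blast
  qed
  have path: "(f^^i) x \<in> D" if xD: "x \<in> D" and i: "i < dC x" for x i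
  proof -
    have xM: "x \<in> M" "x \<noteq> pt" using xD by (auto simp: D_def)
    have "(f^^i) x \<in> M" using funpow_in[OF mod xM(1)] .
    moreover have "(f^^i) x \<noteq> pt"
    proof
      assume "(f^^i) x = pt" then show False using tf xM unfolding mod_torsion_free_def by blast
    qed
    moreover have "(f^^i) x \<notin> Q" using P[OF xD] i by blast
    ultimately show ?thesis by (simp add: D_def)
  qed
  have rtf: "rt (f x) = rt x" if xD: "x \<in> D" and fxD: "f x \<in> D" for x
  proof -
    have "x \<in> M - {pt}" using xD by (simp add: D_def)
    then obtain n where n: "(f^^n) x \<in> Q" using enter by blast
    have nx: "\<not> x \<in> Q" using xD by (simp add: D_def)
    have "dC x = Suc (dC (f x))" unfolding dC_def
      using least_step[where P="\<lambda>x. x \<in> Q" and f=f and n=n and v=x, OF n nx] .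
    then have "dC x - 1 = Suc (dC (f x) - 1)" using P[OF fxD] by simp
    then show ?thesis unfolding rt_def by (simp only: fSuc)
  qed
  have rt_iter: "rt ((f^^i) x) = rt x" if xD: "x \<in> D" and i: "i < dC x" for x i
    using i
  proof (induction i)
    case 0 then show ?case by simp
  next
    case (Suc i)
    have a: "(f^^i) x \<in> D" using path[OF xD] Suc by simp
    have b: "f ((f^^i) x) \<in> D" using path[OF xD Suc(2)] by simp
    have "rt ((f^^(Suc i)) x) = rt (f ((f^^i) x))" by simp
    also have "\<dots> = rt ((f^^i) x)" using rtf[OF a b] .
    also have "\<dots> = rt x" using Suc by simp
    finally show ?case .
  qed
  have "\<forall>x\<in>D. rt x \<in> D \<and> f (rt x) \<in> Q \<and> rooted_tree f {y\<in>D. rt y = rt x} (rt x)"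
  proof
    fix x assume xD: "x \<in> D"
    have lt: "dC x - 1 < dC x" using P[OF xD] by simp
    have rD: "rt x \<in> D" unfolding rt_def using path[OF xD lt] .
    have "Suc (dC x - 1) = dC x" using P[OF xD] by simp
    then have "f (rt x) = (f^^(dC x)) x" unfolding rt_def by (metis funpow.simps(2) o_apply)
    then have frQ: "f (rt x) \<in> Q" using P[OF xD] by simp
    have rr: "rt (rt x) = rt x" unfolding rt_def[of x] using rt_iter[OF xD lt] by (simp add: rt_def)
    have "rooted_tree f {y\<in>D. rt y = rt x} (rt x)"
    proof (rule rooted_treeI)
      show "rt x \<in> {y \<in> D. rt y = rt x}" using rD rr by simp
      show "f (rt x) \<notin> {y \<in> D. rt y = rt x}" using frQ by (simp add: D_def)
      show "\<forall>v\<in>{y \<in> D. rt y = rt x}. \<exists>n. (f ^^ n) v = rt x \<and>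
               (\<forall>i\<le>n. (f ^^ i) v \<in> {y \<in> D. rt y = rt x})"
      proof
        fix v assume v: "v \<in> {y \<in> D. rt y = rt x}"
        then have vD: "v \<in> D" and vr: "rt v = rt x" by auto
        have "(f^^(dC v - 1)) v = rt x" using vr by (simp add: rt_def)
        moreover have "\<forall>i\<le>dC v - 1. (f ^^ i) v \<in> {y \<in> D. rt y = rt x}"
        proof (intro allI impI)
          fix i assume "i \<le> dC v - 1"
          moreover have "0 < dC v" using P[OF vD] by blast
          ultimately have "i < dC v" by linarith
          then show "(f ^^ i) v \<in> {y \<in> D. rt y = rt x}" using path[OF vD] rt_iter[OF vD] vr by simp
        qed
        ultimately show "\<exists>n. (f ^^ n) v = rt x \<and> (\<forall>i\<le>n. (f ^^ i) v \<in> {y \<in> D. rt y = rt x})"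
          by blast
      qed
    qed
    then show "rt x \<in> D \<and> f (rt x) \<in> Q \<and> rooted_tree f {y\<in>D. rt y = rt x} (rt x)"
      using rD frQ by simp
  qed
  then show ?thesis unfolding D_def by blast
qed

context orb begin

lemma cn: "(f^^n) c \<in> M" "(f^^n) c \<noteq> pt"
proof -
  show "(f^^n) c \<in> M" using funpow_in[OF mod cM] .
  show "(f^^n) c \<noteq> pt"
  proof
    assume "(f^^n) c = pt" then show False using tf cM cpt unfolding mod_torsion_free_def by blast
  qed
qed

lemma type3:
  assumes ind: "mod_indecomp M pt f" and k1: "k \<ge> 1"
  shows "graph_type3 M pt f"
proof -
  define C where "C = (\<lambda>i. (f^^i) c) ` {..<k}"
  have ck: "(f^^k) c = c" using per by (metis funpow_0 mod_self mod_0)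
  have injC: "inj_on (\<lambda>i. (f^^i) c) {..<k}" unfolding inj_on_def using per by simp
  have CM: "C \<subseteq> M - {pt}" unfolding C_def using cn by auto
  have enter: "\<forall>x\<in>M-{pt}. \<exists>n. (f^^n) x \<in> C"
  proof
    fix x assume x: "x \<in> M - {pt}"
    obtain a b where ab: "(f^^a) x = (f^^b) c" using meet[OF mod ind _ _ cM cpt] x by blast
    have "(f^^b) c = (f^^(b mod k)) c" using per by simp
    moreover have "b mod k < k" using k1 by simp
    ultimately have "(f^^a) x \<in> C" unfolding C_def using ab by auto
    then show "\<exists>n. (f^^n) x \<in> C" by blast
  qed
  obtain rt where rt: "\<forall>x\<in>M - {pt} - C. rt x \<in> M - {pt} - C \<and> f (rt x) \<in> C \<and>
            rooted_tree f {y\<in>M - {pt} - C. rt y = rt x} (rt x)"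
    using tree_part[OF mod tf CM enter] by blast
  define P where "P = (\<lambda>x. {y\<in>M - {pt} - C. rt y = rt x}) ` (M - {pt} - C)"
  have 1: "\<forall>T\<in>P. \<exists>r. rooted_tree f T r \<and> f r \<in> C" unfolding P_def using rt by blast
  have 2: "pairwise disjnt P" unfolding P_def pairwise_def disjnt_def by auto
  have 3: "{} \<notin> P"
  proof
    assume "{} \<in> P"
    then obtain x where x: "x \<in> M - {pt} - C" "{y\<in>M - {pt} - C. rt y = rt x} = {}"
      unfolding P_def by auto
    have "rooted_tree f {y\<in>M - {pt} - C. rt y = rt x} (rt x)" using rt x(1) by blast
    then have "rt x \<in> {y\<in>M - {pt} - C. rt y = rt x}" by (simp add: rooted_tree_def)
    then show False using x(2) by (metis empty_iff)
  qed
  have 4: "\<Union>P = (M - {pt}) - C" unfolding P_def by auto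
  show ?thesis unfolding graph_type3_def Let_def
    apply (rule exI[of _ c], rule exI[of _ k], rule exI[of _ P])
    using k1 ck injC CM 1 2 3 4 unfolding C_def by simp
qed

end

context orb begin

lemma type2:
  assumes ind: "mod_indecomp M pt f" and k0: "k = 0" and fg: "fin_gen M pt f"
  shows "graph_type2 M pt f"
proof -
  have inj: "(f^^a) c = (f^^b) c \<longleftrightarrow> a = b" for a b using per k0 by simp
  define R where "R N = range (\<lambda>i. (f^^(N+1+i)) c)" for N
  define D where "D N = M - {pt} - R N" for N
  have RM: "R N \<subseteq> M - {pt}" for N
  proof
    fix y assume "y \<in> R N"
    then obtain i where y: "y = (f^^(N+1+i)) c" unfolding R_def by blast
    show "y \<in> M - {pt}" unfolding y using cn(1)[of "N+1+i"] cn(2)[of "N+1+i"] by blast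
  qed
  have enter: "\<forall>x\<in>M-{pt}. \<exists>n. (f^^n) x \<in> R N" for N
  proof
    fix x assume x: "x \<in> M - {pt}"
    obtain a b where ab: "(f^^a) x = (f^^b) c" using meet[OF mod ind _ _ cM cpt] x by blast
    have "(f^^(N+1+a)) x = (f^^(N+1)) ((f^^a) x)" by (simp only: fpa)
    also have "\<dots> = (f^^(N+1+b)) c" using ab by (simp only: fpa)
    finally have "(f^^(N+1+a)) x \<in> R N" unfolding R_def by blast
    then show "\<exists>n. (f^^n) x \<in> R N" by blast
  qed
  have inR: "(f^^n) c \<in> R N \<longleftrightarrow> n \<ge> N + 1" for n N
  proof
    assume "(f^^n) c \<in> R N"
    then obtain i where "(f^^n) c = (f^^(N+1+i)) c" unfolding R_def by blast
    then have "n = N+1+i" by (rule iffD1[OF inj])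
    then show "n \<ge> N + 1" by simp
  next
    assume "n \<ge> N + 1"
    then have "(f^^n) c = (f^^(N+1+(n - (N+1)))) c" by simp
    then show "(f^^n) c \<in> R N" unfolding R_def by blast
  qed
  obtain G where G: "finite G" "G \<subseteq> M" "M = insert pt {(f^^n) g | g n. g \<in> G}"
    using fg unfolding fin_gen_def by blast
  have "\<forall>g\<in>G-{pt}. \<exists>a b. (f^^a) g = (f^^b) c"
    using meet[OF mod ind _ _ cM cpt] G(2) by blast
  then obtain A B where AB: "\<forall>g\<in>G-{pt}. (f^^(A g)) g = (f^^(B g)) c" by metis
  have D0: "D 0 \<subseteq> (\<Union>g\<in>G-{pt}. (\<lambda>n. (f^^n) g) ` {..A g})"
  proof
    fix y assume y: "y \<in> D 0"
    then have "y \<in> M" "y \<noteq> pt" "y \<notin> R 0" by (auto simp: D_def)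
    then obtain g n where gn: "g \<in> G" "y = (f^^n) g" using G(3) by auto
    have gpt: "g \<noteq> pt" using gn \<open>y \<noteq> pt\<close> funpow_pt[OF mod] by auto
    show "y \<in> (\<Union>g\<in>G-{pt}. (\<lambda>n. (f^^n) g) ` {..A g})"
    proof (cases "n \<le> A g")
      case True then show ?thesis using gn gpt by auto
    next
      case False
      have "y = (f^^(n - A g + A g)) g" using gn False by simp
      also have "\<dots> = (f^^(n - A g)) ((f^^(A g)) g)" by (simp only: fpa)
      also have "\<dots> = (f^^(n - A g)) ((f^^(B g)) c)" using AB gn gpt by simp
      also have "\<dots> = (f^^(n - A g + B g)) c" by (simp only: fpa)
      finally have "y \<in> R 0" using inR False by simp
      then show ?thesis using \<open>y \<notin> R 0\<close> by simp
    qed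
  qed
  have finD0: "finite (D 0)" using finite_subset[OF D0] G(1) by auto
  define J where "J = (\<lambda>i. (f^^(Suc i)) c) -` (f ` D 0)"
  have finJ: "finite J" unfolding J_def
  proof (rule finite_vimageI)
    show "finite (f ` D 0)" using finD0 by simp
    show "inj (\<lambda>i. (f^^(Suc i)) c)"
    proof (rule injI)
      fix x y assume "(f^^(Suc x)) c = (f^^(Suc y)) c"
      then have "Suc x = Suc y" by (rule iffD1[OF inj])
      then show "x = y" by simp
    qed
  qed
  define N where "N = Suc (Max (insert 0 J))"
  have JN: "j < N" if "j \<in> J" for j
  proof -
    have "j \<le> Max (insert 0 J)" using finJ that by simp
    then show ?thesis by (simp add: N_def)
  qed
  define r where "r = (f^^N) c"
  have DN: "D N \<subseteq> D 0 \<union> (\<lambda>i. (f^^i) c) ` {..N}"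
  proof
    fix y assume y: "y \<in> D N"
    show "y \<in> D 0 \<union> (\<lambda>i. (f^^i) c) ` {..N}"
    proof (cases "y \<in> R 0")
      case False then show ?thesis using y by (auto simp: D_def)
    next
      case True
      then obtain i where i: "y = (f^^(0+1+i)) c" unfolding R_def by blast
      have yR: "y \<notin> R N" using y unfolding D_def by blast
      have "\<not> (0+1+i \<ge> N + 1)"
      proof
        assume "0+1+i \<ge> N + 1"
        then have "(f^^(0+1+i)) c \<in> R N" by (rule iffD2[OF inR])
        then show False using yR i by simp
      qed
      then have "0+1+i \<in> {..N}" by simp
      then have "y \<in> (\<lambda>i. (f^^i) c) ` {..N}" using i by (intro image_eqI[where x="0+1+i"]) simp_all
      then show ?thesis by blast
    qed
  qed
  have finDN: "finite (D N)" using finite_subset[OF DN] finD0 by auto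
  have uniq: "x = r" if x: "x \<in> D N" "f x \<in> R N" for x
  proof -
    obtain i where i: "f x = (f^^(N+1+i)) c" using x(2) unfolding R_def by blast
    show ?thesis
    proof (cases "x \<in> D 0")
      case True
      have "(f^^(Suc (N+i))) c = f x" using i by simp
      then have "(f^^(Suc (N+i))) c \<in> f ` D 0" using True by (intro image_eqI[where x=x])
      then have "N + i \<in> J" unfolding J_def by simp
      then have "N + i < N" by (rule JN)
      then show ?thesis by simp
    next
      case False
      then have "x \<in> R 0" using x(1) by (auto simp: D_def)
      then obtain j where j: "x = (f^^(0+1+j)) c" unfolding R_def by blast
      have xR: "x \<notin> R N" using x(1) unfolding D_def by blast
      have "\<not> (0+1+j \<ge> N + 1)"
      proof
        assume "0+1+j \<ge> N + 1"
        then have "(f^^(0+1+j)) c \<in> R N" by (rule iffD2[OF inR])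
        then show False using xR j by simp
      qed
      moreover have "f x = (f^^(Suc (1+j))) c" using j by simp
      then have "(f^^(Suc (1+j))) c = (f^^(N+1+i)) c" using i by simp
      then have "Suc (1 + j) = N + 1 + i" by (rule iffD1[OF inj])
      ultimately have "1 + j = N" by simp
      then show ?thesis using j by (simp add: r_def)
    qed
  qed
  obtain rt where rt: "\<forall>x\<in>M - {pt} - R N. rt x \<in> M - {pt} - R N \<and> f (rt x) \<in> R N \<and>
            rooted_tree f {y\<in>M - {pt} - R N. rt y = rt x} (rt x)"
    using tree_part[OF mod tf RM enter] by blast
  have rD: "r \<in> D N" unfolding D_def r_def using cn inR by auto
  have allr: "rt y = r" if "y \<in> D N" for y using rt uniq that unfolding D_def by blast
  have "{y\<in>D N. rt y = rt r} = D N" using allr rD by auto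
  then have rtree: "rooted_tree f (D N) r" using rt rD allr unfolding D_def by metis
  show ?thesis unfolding graph_type2_def
  proof (intro exI conjI)
    show "finite (D N)" by (rule finDN)
    show "rooted_tree f (D N) r" by (rule rtree)
    show "inj (\<lambda>i. (f^^(N+1+i)) c)"
    proof (rule injI)
      fix x y assume "(f^^(N+1+x)) c = (f^^(N+1+y)) c"
      then have "N+1+x = N+1+y" by (rule iffD1[OF inj])
      then show "x = y" by simp
    qed
    show "range (\<lambda>i. (f^^(N+1+i)) c) \<inter> D N = {}" by (auto simp: D_def R_def)
    show "M - {pt} = D N \<union> range (\<lambda>i. (f^^(N+1+i)) c)" using RM[of N] by (auto simp: D_def R_def)
    show "f r = (f^^(N+1+0)) c" by (simp add: r_def)
    show "\<forall>i. f ((f^^(N+1+i)) c) = (f^^(N+1+Suc i)) c" by simp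
  qed
qed

end

lemma lmod_iso_comp:
  assumes h: "lmod_iso N1 p1 s1 N2 p2 s2 h" and g: "lmod_iso N2 p2 s2 N3 p3 s3 g"
  shows "lmod_iso N1 p1 s1 N3 p3 s3 (g \<circ> h)"
proof -
  have hb: "bij_betw h N1 N2" and gb: "bij_betw g N2 N3" using h g by (auto simp: lmod_iso_def)
  have "bij_betw (g \<circ> h) N1 N3" using bij_betw_trans[OF hb gb] .
  moreover have "(g \<circ> h) p1 = p3" using h g by (simp add: lmod_iso_def)
  moreover have "\<forall>x\<in>N1. (g \<circ> h) (s1 x) = s3 ((g \<circ> h) x)"
  proof
    fix x assume x: "x \<in> N1"
    have "h x \<in> N2" using hb x by (auto simp: bij_betw_def)
    then show "(g \<circ> h) (s1 x) = s3 ((g \<circ> h) x)" using h g x by (simp add: lmod_iso_def)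
  qed
  ultimately show ?thesis unfolding lmod_iso_def by blast
qed

lemma tor_split:
  assumes mod: "is_mod M p f"
  shows "mod_split M p f {m\<in>M. \<exists>n. (f^^n) m = p} (insert p {m\<in>M. \<not> (\<exists>n. (f^^n) m = p)})"
proof -
  have pM: "p \<in> M" "f p = p" using mod by (auto simp: is_mod_def)
  have fM: "f m \<in> M" if "m \<in> M" for m using mod that by (auto simp: is_mod_def)
  have s1: "\<exists>n. (f^^n) (f m) = p" if "(f^^n) m = p" for m n
  proof -
    have "(f^^n) (f m) = f ((f^^n) m)" by (rule fS[symmetric])
    then have "(f^^n) (f m) = p" using that pM(2) by (simp only:)
    then show ?thesis by blast
  qed
  have s2: "\<exists>n. (f^^n) m = p" if "(f^^n) (f m) = p" for m n
  proof -
    have "(f^^(Suc n)) m = p" using that by (simp only: fSuc)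
    then show ?thesis by blast
  qed
  have p0: "(f^^0) p = p" by simp
  have pT: "p \<in> {m\<in>M. \<exists>n. (f^^n) m = p}" using pM(1) p0 by blast
  have cT: "f m \<in> {m\<in>M. \<exists>n. (f^^n) m = p}" if mT: "m \<in> {m\<in>M. \<exists>n. (f^^n) m = p}" for m
  proof -
    obtain n where n: "m \<in> M" "(f^^n) m = p" using mT by blast
    have "f m \<in> M" using fM n(1) .
    moreover have "\<exists>n. (f^^n) (f m) = p" using s1[OF n(2)] .
    ultimately show ?thesis by blast
  qed
  have m1: "is_mod {m\<in>M. \<exists>n. (f^^n) m = p} p f" unfolding is_mod_def
    using pT cT pM(2) by blast
  have cB: "f m \<in> insert p {m\<in>M. \<not> (\<exists>n. (f^^n) m = p)}"
    if "m \<in> insert p {m\<in>M. \<not> (\<exists>n. (f^^n) m = p)}" for m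
  proof (cases "m = p")
    case True then show ?thesis using pM(2) by simp
  next
    case False
    then have m: "m \<in> M" "\<not> (\<exists>n. (f^^n) m = p)" using that by auto
    have "f m \<in> M" using fM m(1) .
    moreover have "\<not> (\<exists>n. (f^^n) (f m) = p)" using s2 m(2) by blast
    ultimately show ?thesis by blast
  qed
  have m2: "is_mod (insert p {m\<in>M. \<not> (\<exists>n. (f^^n) m = p)}) p f" unfolding is_mod_def
    using cB pM(2) by blast
  have U: "{m\<in>M. \<exists>n. (f^^n) m = p} \<union> insert p {m\<in>M. \<not> (\<exists>n. (f^^n) m = p)} = M"
    using pM(1) by blast
  have I: "{m\<in>M. \<exists>n. (f^^n) m = p} \<inter> insert p {m\<in>M. \<not> (\<exists>n. (f^^n) m = p)} = {p}"
    using pT by blast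
  show ?thesis unfolding mod_split_def using m1 m2 U I by blast
qed

lemma cls_tor: assumes mod: "is_mod M p f" and m: "m \<in> M" "(f^^n) m = p"
  shows "cls M f (m,i) = loc_pt M f p"
  using cls_pt_iff[OF mod m(1)] m(2) by blast

lemma tf_loc:
  assumes mod: "is_mod M p f" and tf: "mod_torsion_free M p f"
  shows "lmod_torsion_free (loc M f) (loc_pt M f p) (loc_fwd M f) (loc_bwd M f)"
    "lmod_torsion_free (loc M f) (loc_pt M f p) (loc_bwd M f) (loc_fwd M f)"
proof -
  have main: "x = loc_pt M f p" if x: "x \<in> loc M f"
    and h: "(loc_fwd M f ^^ n) x = loc_pt M f p \<or> (loc_bwd M f ^^ n) x = loc_pt M f p" for x n
  proof -
    obtain m i where mi: "x = cls M f (m,i)" "m \<in> M" using x by (auto simp: loc_def)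
    have "\<exists>j. (f^^j) m = p"
    proof (cases "(loc_fwd M f ^^ n) x = loc_pt M f p")
      case True
      then have "cls M f ((f^^n) m, i) = loc_pt M f p" using loc_fwd_pow[OF mod mi(2)] mi(1) by simp
      then obtain j where "(f^^j) ((f^^n) m) = p"
        using cls_pt_iff[OF mod funpow_in[OF mod mi(2)]] by blast
      then have "(f^^(j+n)) m = p" by (simp add: fpa)
      then show ?thesis by blast
    next
      case False
      then have "cls M f (m, i+n) = loc_pt M f p" using h loc_bwd_pow[OF mi(2)] mi(1) by simp
      then show ?thesis using cls_pt_iff[OF mod mi(2)] by blast
    qed
    then have "m = p" using tf mi(2) unfolding mod_torsion_free_def by blast
    then show ?thesis using mi cls_tor[OF mod, of p 0] mod by (auto simp: is_mod_def)
  qed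
  show "lmod_torsion_free (loc M f) (loc_pt M f p) (loc_fwd M f) (loc_bwd M f)"
    unfolding lmod_torsion_free_def using main by blast
  show "lmod_torsion_free (loc M f) (loc_pt M f p) (loc_bwd M f) (loc_fwd M f)"
    unfolding lmod_torsion_free_def using main by blast
qed

lemma tor_loc:
  assumes mod: "is_mod M p f" and tor: "mod_torsion M p f"
  shows "lmod_torsion (loc M f) (loc_pt M f p) s t"
  unfolding lmod_torsion_def using loc_torsion[OF mod tor] by (metis funpow_0)

lemma triv_loc_tf:
  assumes mod: "is_mod M p f" and tf: "mod_torsion_free M p f"
    and L: "\<forall>x\<in>loc M f. x = loc_pt M f p"
  shows "M = {p}"
proof -
  have "m = p" if m: "m \<in> M" for m
  proof -
    have "cls M f (m,0) = loc_pt M f p" using L loc_cls[OF m] by blast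
    then have "\<exists>n. (f^^n) m = p" using cls_pt_iff[OF mod m] by blast
    then show ?thesis using tf m unfolding mod_torsion_free_def by blast
  qed
  then show ?thesis using mod by (auto simp: is_mod_def)
qed

lemma transfer_split:
  assumes modM: "is_mod M pt f" and modN: "is_mod N q g"
    and tfM: "mod_torsion_free M pt f" and tfN: "mod_torsion_free N q g"
    and bij: "bij_betw \<psi> (loc M f) (loc N g)" and ptm: "\<psi> (loc_pt M f pt) = loc_pt N g q"
    and comm: "\<forall>x\<in>loc M f. loc_fwd N g (\<psi> x) = \<psi> (loc_bwd M f x)"
    and sp: "mod_split M pt f A B"
  shows "mod_split N q g {b\<in>N. cls N g (b,0) \<in> \<psi> ` clsset M f A}
                        {b\<in>N. cls N g (b,0) \<in> \<psi> ` clsset M f B}"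
proof -
  have U: "A \<union> B = M" and I: "A \<inter> B = {pt}" and mA: "is_mod A pt f" and mB: "is_mod B pt f"
    using sp by (auto simp: mod_split_def)
  have qN: "q \<in> N" "g q = q" using modN by (auto simp: is_mod_def)
  have ptAB: "pt \<in> A" "pt \<in> B" using mA mB by (auto simp: is_mod_def)
  have clsM: "clsset M f X \<subseteq> loc M f" if "X \<subseteq> M" for X
    using that by (auto simp: clsset_def loc_def)
  have qin: "cls N g (q,0) \<in> \<psi> ` clsset M f X" if "pt \<in> X" for X
  proof -
    have "cls N g (q,0) = \<psi> (cls M f (pt,0))" using ptm by (simp add: loc_pt_def)
    moreover have "cls M f (pt,0) \<in> clsset M f X" using that by (auto simp: clsset_def)
    ultimately show ?thesis by blast
  qed
  have clo: "g b \<in> {b\<in>N. cls N g (b,0) \<in> \<psi> ` clsset M f X}"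
    if X: "X \<subseteq> M" and b: "b \<in> {b\<in>N. cls N g (b,0) \<in> \<psi> ` clsset M f X}" for X b
  proof -
    have bN: "b \<in> N" using b by simp
    obtain y where y: "y \<in> clsset M f X" "cls N g (b,0) = \<psi> y" using b by auto
    obtain a i where ai: "y = cls M f (a,i)" "a \<in> X" using y(1) by (auto simp: clsset_def)
    have aM: "a \<in> M" using ai X by auto
    have yL: "y \<in> loc M f" using ai aM by (simp add: loc_cls)
    have "cls N g (g b, 0) = loc_fwd N g (cls N g (b,0))" using loc_fwd_cls[OF modN bN] by simp
    also have "\<dots> = \<psi> (loc_bwd M f y)" using y(2) comm yL by simp
    also have "loc_bwd M f y = cls M f (a, Suc i)" using ai loc_bwd_cls[OF aM] by simp
    finally have "cls N g (g b, 0) \<in> \<psi> ` clsset M f X" using ai(2) by (auto simp: clsset_def)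
    moreover have "g b \<in> N" using modN bN by (auto simp: is_mod_def)
    ultimately show ?thesis by simp
  qed
  have AM: "A \<subseteq> M" "B \<subseteq> M" using U by auto
  have m1: "is_mod {b\<in>N. cls N g (b,0) \<in> \<psi> ` clsset M f A} q g"
    unfolding is_mod_def using qN qin[OF ptAB(1)] clo[OF AM(1)] by blast
  have m2: "is_mod {b\<in>N. cls N g (b,0) \<in> \<psi> ` clsset M f B} q g"
    unfolding is_mod_def using qN qin[OF ptAB(2)] clo[OF AM(2)] by blast
  have un: "{b\<in>N. cls N g (b,0) \<in> \<psi> ` clsset M f A} \<union> {b\<in>N. cls N g (b,0) \<in> \<psi> ` clsset M f B} = N"
  proof
    show "N \<subseteq> {b\<in>N. cls N g (b,0) \<in> \<psi> ` clsset M f A} \<union> {b\<in>N. cls N g (b,0) \<in> \<psi> ` clsset M f B}"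
    proof
      fix b assume bN: "b \<in> N"
      have "cls N g (b,0) \<in> loc N g" using loc_cls[OF bN] .
      then obtain x where x: "x \<in> loc M f" "cls N g (b,0) = \<psi> x" using bij
        unfolding bij_betw_def by (metis imageE)
      obtain m i where mi: "x = cls M f (m,i)" "m \<in> M" using x(1) by (auto simp: loc_def)
      have "x \<in> clsset M f A \<or> x \<in> clsset M f B" using mi U by (auto simp: clsset_def)
      then show "b \<in> {b\<in>N. cls N g (b,0) \<in> \<psi> ` clsset M f A} \<union> {b\<in>N. cls N g (b,0) \<in> \<psi> ` clsset M f B}"
        using x(2) bN by auto
    qed
  qed auto
  have int: "{b\<in>N. cls N g (b,0) \<in> \<psi> ` clsset M f A} \<inter> {b\<in>N. cls N g (b,0) \<in> \<psi> ` clsset M f B} = {q}"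
  proof
    show "{q} \<subseteq> {b\<in>N. cls N g (b,0) \<in> \<psi> ` clsset M f A} \<inter> {b\<in>N. cls N g (b,0) \<in> \<psi> ` clsset M f B}"
      using qN qin ptAB by auto
    show "{b\<in>N. cls N g (b,0) \<in> \<psi> ` clsset M f A} \<inter> {b\<in>N. cls N g (b,0) \<in> \<psi> ` clsset M f B} \<subseteq> {q}"
    proof
      fix b assume b: "b \<in> {b\<in>N. cls N g (b,0) \<in> \<psi> ` clsset M f A} \<inter> {b\<in>N. cls N g (b,0) \<in> \<psi> ` clsset M f B}"
      then have bN: "b \<in> N" by simp
      obtain y1 where y1: "y1 \<in> clsset M f A" "cls N g (b,0) = \<psi> y1" using b by auto
      obtain y2 where y2: "y2 \<in> clsset M f B" "cls N g (b,0) = \<psi> y2" using b by auto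
      obtain a i where ai: "y1 = cls M f (a,i)" "a \<in> A" using y1(1) by (auto simp: clsset_def)
      obtain c l where cl: "y2 = cls M f (c,l)" "c \<in> B" using y2(1) by (auto simp: clsset_def)
      have L: "y1 \<in> loc M f" "y2 \<in> loc M f" using clsM AM y1 y2 by auto
      have "y1 = y2" using bij L y1(2) y2(2) unfolding bij_betw_def inj_on_def by metis
      then have "a = pt" using split_disj[OF modM tfM sp ai(2) cl(2)] ai cl by simp
      then have "y1 = loc_pt M f pt" using ai cls_tor[OF modM, of pt 0] modM by (auto simp: is_mod_def)
      then have "cls N g (b,0) = loc_pt N g q" using y1(2) ptm by simp
      then have "\<exists>n. (g^^n) b = q" using cls_pt_iff[OF modN bN] by blast
      then show "b \<in> {q}" using tfN bN unfolding mod_torsion_free_def by blast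
    qed
  qed
  show ?thesis unfolding mod_split_def using m1 m2 un int by blast
qed

lemma classify:
  assumes mod: "is_mod M p f" and tf: "mod_torsion_free M p f" and ind: "mod_indecomp M p f"
    and fg: "fin_gen M p f"
  shows "(graph_type2 M p f \<and>
          (\<exists>\<alpha>. lmod_iso (loc M f) (loc_pt M f p) (loc_fwd M f) L_car None L_t \<alpha>) \<and>
          (\<exists>\<alpha>. lmod_iso (loc M f) (loc_pt M f p) (loc_bwd M f) L_car None L_t \<alpha>))
       \<or> (\<exists>k\<ge>1. graph_type3 M p f \<and>
          (\<exists>\<alpha>. lmod_iso (loc M f) (loc_pt M f p) (loc_fwd M f) (C_car k) None (C_t k) \<alpha>) \<and>
          (\<exists>\<alpha>. lmod_iso (loc M f) (loc_pt M f p) (loc_bwd M f) (C_car k) None (C_t k) \<alpha>))"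
proof (cases "\<exists>x\<in>M-{p}. \<exists>q>0. (f^^q) x = x")
  case True
  then obtain c q where c: "c \<in> M" "c \<noteq> p" "q > 0" "(f^^q) c = c" by blast
  define k where "k = (LEAST q. q > 0 \<and> (f^^q) c = c)"
  have k: "k > 0" "\<forall>a b. (f^^a) c = (f^^b) c \<longleftrightarrow> a mod k = b mod k"
    using per_least[OF c(3,4)] unfolding k_def by auto
  interpret O: orb M p f c k using mod tf c k by unfold_locales auto
  have k1: "k \<ge> 1" using k by simp
  show ?thesis using O.type3[OF ind k1] O.iso_C[OF ind k1] k1 by blast
next
  case False
  have Mne: "M \<noteq> {p}" using ind by (simp add: mod_indecomp_def)
  then obtain c where c: "c \<in> M" "c \<noteq> p" using mod by (auto simp: is_mod_def)
  have np: "\<forall>x\<in>M-{p}. \<forall>q>0. (f^^q) x \<noteq> x" using False by blast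
  have per: "\<forall>a b. (f^^a) c = (f^^b) c \<longleftrightarrow> a mod 0 = b mod 0" by (rule nonper[OF mod tf np c])
  interpret O: orb M p f c 0 using mod tf c per by unfold_locales auto
  show ?thesis using O.type2[OF ind _ fg] O.iso_L[OF ind] by blast
qed

lemma glue_L:
  assumes a: "lmod_iso N1 q1 s1 L_car None L_t \<alpha>" and b: "lmod_iso N2 q2 s2 L_car None L_t \<beta>"
    and ph: "lmod_iso N1 q1 s1 N2 q2 s2 \<phi>" and q1: "q1 \<in> N1" and cl: "\<forall>x\<in>N1. s1 x \<in> N1"
  shows "\<exists>n. \<forall>x\<in>N1. \<beta> (\<phi> x) = phiL n (\<alpha> x)"
proof -
  have ai: "lmod_iso L_car None L_t N1 q1 s1 (inv_into N1 \<alpha>)" by (rule lmod_iso_inv[OF a q1 cl])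
  have "lmod_iso L_car None L_t L_car None L_t (\<beta> \<circ> (\<phi> \<circ> inv_into N1 \<alpha>))"
    by (rule lmod_iso_comp[OF lmod_iso_comp[OF ai ph] b])
  then obtain n where n: "\<forall>x. (\<beta> \<circ> (\<phi> \<circ> inv_into N1 \<alpha>)) x = phiL n x" using L_aut by blast
  have inj: "inj_on \<alpha> N1" using a by (auto simp: lmod_iso_def bij_betw_def)
  have "\<beta> (\<phi> x) = phiL n (\<alpha> x)" if "x \<in> N1" for x
    using n[rule_format, of "\<alpha> x"] inv_into_f_f[OF inj that] by simp
  then show ?thesis by blast
qed

lemma glue_C:
  assumes a: "lmod_iso N1 q1 s1 (C_car k) None (C_t k) \<alpha>" and b: "lmod_iso N2 q2 s2 (C_car k) None (C_t k) \<beta>"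
    and ph: "lmod_iso N1 q1 s1 N2 q2 s2 \<phi>" and q1: "q1 \<in> N1" and cl: "\<forall>x\<in>N1. s1 x \<in> N1"
    and k: "k \<ge> 1"
  shows "\<exists>m. \<forall>x\<in>N1. \<beta> (\<phi> x) = psiC k m (\<alpha> x)"
proof -
  have ai: "lmod_iso (C_car k) None (C_t k) N1 q1 s1 (inv_into N1 \<alpha>)" by (rule lmod_iso_inv[OF a q1 cl])
  have "lmod_iso (C_car k) None (C_t k) (C_car k) None (C_t k) (\<beta> \<circ> (\<phi> \<circ> inv_into N1 \<alpha>))"
    by (rule lmod_iso_comp[OF lmod_iso_comp[OF ai ph] b])
  then obtain m where m: "\<forall>x\<in>C_car k. (\<beta> \<circ> (\<phi> \<circ> inv_into N1 \<alpha>)) x = psiC k m x"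
    using C_aut[OF _ k] by blast
  have inj: "inj_on \<alpha> N1" and img: "\<alpha> ` N1 = C_car k" using a by (auto simp: lmod_iso_def bij_betw_def)
  have "\<beta> (\<phi> x) = psiC k m (\<alpha> x)" if "x \<in> N1" for x
  proof -
    have "\<alpha> x \<in> C_car k" using img that by blast
    then have "\<beta> (\<phi> (inv_into N1 \<alpha> (\<alpha> x))) = psiC k m (\<alpha> x)" using m by simp
    then show ?thesis using inv_into_f_f[OF inj that] by simp
  qed
  then show ?thesis by blast
qed

lemma bij_card_k:
  assumes "bij_betw \<alpha> N1 (C_car k1)" "bij_betw \<beta> N2 (C_car k2)" "bij_betw \<phi> N1 N2"
  shows "k1 = k2"
proof -
  have "card N1 = card (C_car k1)" "card N2 = card (C_car k2)" "card N1 = card N2"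
    using assms bij_betw_same_card by blast+
  then show ?thesis using card_C by simp
qed

lemma bij_LC:
  assumes "bij_betw \<alpha> N1 A" "bij_betw \<beta> N2 B" "bij_betw \<phi> N1 N2" "finite A \<noteq> finite B"
  shows False
  using assms bij_betw_finite by metis

theorem mainTheorem12:
  fixes M1 M2 :: "'a set" and p1 p2 :: 'a and f1 f2 :: "'a \<Rightarrow> 'a"
    and phi :: "('a \<times> nat) set \<Rightarrow> ('a \<times> nat) set"
  assumes "coherent_triple M1 p1 f1 M2 p2 f2 phi"
    and "triple_indecomp M1 p1 f1 M2 p2 f2 phi"
  shows "(mod_indecomp M1 p1 f1 \<or> M1 = {p1}) \<and> (mod_indecomp M2 p2 f2 \<or> M2 = {p2}) \<and>
    ((M2 = {p2} \<and> graph_type1 M1 p1 f1 \<and> triple_torsion M1 p1 f1 M2 p2 f2)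
     \<or> (M1 = {p1} \<and> graph_type1 M2 p2 f2 \<and> triple_torsion M1 p1 f1 M2 p2 f2)
     \<or> (graph_type2 M1 p1 f1 \<and> graph_type2 M2 p2 f2 \<and>
        (\<exists>\<alpha> \<beta> (n::int).
           lmod_iso (loc M1 f1) (loc_pt M1 f1 p1) (loc_fwd M1 f1) L_car None L_t \<alpha> \<and>
           lmod_iso (loc M2 f2) (loc_pt M2 f2 p2) (loc_bwd M2 f2) L_car None L_t \<beta> \<and>
           (\<forall>x\<in>loc M1 f1. \<beta> (phi x) = phiL n (\<alpha> x))) \<and>
        triple_torsion_free M1 p1 f1 M2 p2 f2)
     \<or> (graph_type3 M1 p1 f1 \<and> graph_type3 M2 p2 f2 \<and>
        (\<exists>(k::nat) \<alpha> \<beta> (m::int). k \<ge> 1 \<and>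
           lmod_iso (loc M1 f1) (loc_pt M1 f1 p1) (loc_fwd M1 f1) (C_car k) None (C_t k) \<alpha> \<and>
           lmod_iso (loc M2 f2) (loc_pt M2 f2 p2) (loc_bwd M2 f2) (C_car k) None (C_t k) \<beta> \<and>
           (\<forall>x\<in>loc M1 f1. \<beta> (phi x) = psiC k m (\<alpha> x))) \<and>
        triple_torsion_free M1 p1 f1 M2 p2 f2))"
proof -
  have mod1: "is_mod M1 p1 f1" and fg1: "fin_gen M1 p1 f1" and mod2: "is_mod M2 p2 f2"
    and fg2: "fin_gen M2 p2 f2"
    and iso: "lmod_iso (loc M1 f1) (loc_pt M1 f1 p1) (loc_fwd M1 f1)
              (loc M2 f2) (loc_pt M2 f2 p2) (loc_bwd M2 f2) phi"
    using assms(1) by (auto simp: coherent_triple_def)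
  have bij: "bij_betw phi (loc M1 f1) (loc M2 f2)" and ptm: "phi (loc_pt M1 f1 p1) = loc_pt M2 f2 p2"
    and comm: "\<forall>x\<in>loc M1 f1. phi (loc_fwd M1 f1 x) = loc_bwd M2 f2 (phi x)"
    using iso by (auto simp: lmod_iso_def)
  have nd: "\<not> triple_decomposable M1 p1 f1 M2 p2 f2 phi" and ne: "M1 \<noteq> {p1} \<or> M2 \<noteq> {p2}"
    using assms(2) by (auto simp: triple_indecomp_def)
  have p1M: "p1 \<in> M1" "f1 p1 = p1" using mod1 by (auto simp: is_mod_def)
  have p2M: "p2 \<in> M2" "f2 p2 = p2" using mod2 by (auto simp: is_mod_def)
  have inj: "inj_on phi (loc M1 f1)" and img: "phi ` loc M1 f1 = loc M2 f2"
    using bij by (auto simp: bij_betw_def)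
  have phiM: "\<exists>b j. b \<in> M2 \<and> phi x = cls M2 f2 (b,j)" if "x \<in> loc M1 f1" for x
  proof -
    have "phi x \<in> loc M2 f2" using img that by blast
    then show ?thesis by (auto simp: loc_def)
  qed
  have phi_tor: "phi (cls M1 f1 (a,i)) = cls M2 f2 (p2,0)" if "a \<in> M1" "(f1^^n) a = p1" for a i n
    using cls_tor[OF mod1 that] ptm by (simp add: loc_pt_def)
  have tor2pt: "cls M2 f2 (b,j) = cls M2 f2 (p2,0)" if "b \<in> M2" "(f2^^n) b = p2" for b j n
    using cls_tor[OF mod2 that] by (simp add: loc_pt_def)
  have p1t: "(f1^^0) p1 = p1" and p2t: "(f2^^0) p2 = p2" by simp_all
  have loc1: "cls M1 f1 (a,i) \<in> loc M1 f1" if "a \<in> M1" for a i using loc_cls[OF that] .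
  define T1 where "T1 = {m\<in>M1. \<exists>n. (f1^^n) m = p1}"
  define B1 where "B1 = insert p1 {m\<in>M1. \<not> (\<exists>n. (f1^^n) m = p1)}"
  define T2 where "T2 = {m\<in>M2. \<exists>n. (f2^^n) m = p2}"
  define B2 where "B2 = insert p2 {m\<in>M2. \<not> (\<exists>n. (f2^^n) m = p2)}"
  have sp1: "mod_split M1 p1 f1 T1 B1" unfolding T1_def B1_def by (rule tor_split[OF mod1])
  have sp2: "mod_split M2 p2 f2 T2 B2" unfolding T2_def B2_def by (rule tor_split[OF mod2])
  have condT: "\<forall>a\<in>T1. \<forall>i. phi (cls M1 f1 (a, i)) \<in> {cls M2 f2 (b, j) |b j. b \<in> T2}"
  proof (intro ballI allI)
    fix a i assume "a \<in> T1"
    then obtain n where "a \<in> M1" "(f1^^n) a = p1" by (auto simp: T1_def)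
    then have "phi (cls M1 f1 (a, i)) = cls M2 f2 (p2,0)" by (rule phi_tor)
    moreover have "p2 \<in> T2" using p2M(1) p2t unfolding T2_def by blast
    ultimately show "phi (cls M1 f1 (a, i)) \<in> {cls M2 f2 (b, j) |b j. b \<in> T2}" by blast
  qed
  have condB: "\<forall>a\<in>B1. \<forall>i. phi (cls M1 f1 (a, i)) \<in> {cls M2 f2 (b, j) |b j. b \<in> B2}"
  proof (intro ballI allI)
    fix a i assume a: "a \<in> B1"
    have aM: "a \<in> M1" using a p1M by (auto simp: B1_def)
    have p2B: "p2 \<in> B2" by (simp add: B2_def)
    show "phi (cls M1 f1 (a, i)) \<in> {cls M2 f2 (b, j) |b j. b \<in> B2}"
    proof (cases "a = p1")
      case True
      then have "phi (cls M1 f1 (a, i)) = cls M2 f2 (p2,0)" using phi_tor[OF aM, of 0] by simp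
      then show ?thesis using p2B by blast
    next
      case False
      obtain b j where bj: "b \<in> M2" "phi (cls M1 f1 (a, i)) = cls M2 f2 (b,j)"
        using phiM[OF loc1[OF aM]] by blast
      show ?thesis
      proof (cases "\<exists>n. (f2^^n) b = p2")
        case True
        then obtain n where "(f2^^n) b = p2" by blast
        then have "cls M2 f2 (b,j) = cls M2 f2 (p2,0)" using tor2pt[OF bj(1)] by blast
        then show ?thesis using bj p2B by auto
      next
        case False
        then have "b \<in> B2" using bj(1) by (simp add: B2_def)
        then show ?thesis using bj by blast
      qed
    qed
  qed
  have AB: "(T1 = {p1} \<and> T2 = {p2}) \<or> (B1 = {p1} \<and> B2 = {p2})"
  proof (rule ccontr)
    assume "\<not> ((T1 = {p1} \<and> T2 = {p2}) \<or> (B1 = {p1} \<and> B2 = {p2}))"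
    then have "triple_decomposable M1 p1 f1 M2 p2 f2 phi" unfolding triple_decomposable_def
      using sp1 sp2 condT condB by blast
    then show False using nd by simp
  qed
  show ?thesis
  proof (cases "B1 = {p1} \<and> B2 = {p2}")
    case True
    have tor1: "mod_torsion M1 p1 f1" unfolding mod_torsion_def
    proof
      fix m assume m: "m \<in> M1"
      show "\<exists>n. (f1^^n) m = p1"
      proof (rule ccontr)
        assume "\<not> (\<exists>n. (f1^^n) m = p1)"
        then have "m \<in> B1" using m by (simp add: B1_def)
        then have "m = p1" using True by simp
        then show False using p1t \<open>\<not> (\<exists>n. (f1^^n) m = p1)\<close> by blast
      qed
    qed
    have tor2: "mod_torsion M2 p2 f2" unfolding mod_torsion_def
    proof
      fix m assume m: "m \<in> M2"
      show "\<exists>n. (f2^^n) m = p2"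
      proof (rule ccontr)
        assume "\<not> (\<exists>n. (f2^^n) m = p2)"
        then have "m \<in> B2" using m by (simp add: B2_def)
        then have "m = p2" using True by simp
        then show False using p2t \<open>\<not> (\<exists>n. (f2^^n) m = p2)\<close> by blast
      qed
    qed
    have ptor: "phi (cls M1 f1 (a,i)) = cls M2 f2 (p2,0)" if "a \<in> M1" for a i
      using tor1 that phi_tor unfolding mod_torsion_def by blast
    have tt: "triple_torsion M1 p1 f1 M2 p2 f2" unfolding triple_torsion_def
      using tor1 tor2 tor_loc[OF mod1 tor1] tor_loc[OF mod2 tor2] by blast
    have triv1: "mod_split M p f M {p}" if "is_mod M p f" for M p f
      using that by (auto simp: mod_split_def is_mod_def)
    have triv2: "mod_split M p f {p} M" if "is_mod M p f" for M p f
      using that by (auto simp: mod_split_def is_mod_def)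
    have one: "M1 = {p1} \<or> M2 = {p2}"
    proof (rule ccontr)
      assume c: "\<not> (M1 = {p1} \<or> M2 = {p2})"
      have "triple_decomposable M1 p1 f1 M2 p2 f2 phi" unfolding triple_decomposable_def
      proof (intro exI conjI)
        show "mod_split M1 p1 f1 M1 {p1}" by (rule triv1[OF mod1])
        show "mod_split M2 p2 f2 {p2} M2" by (rule triv2[OF mod2])
        show "\<forall>a\<in>M1. \<forall>i. phi (cls M1 f1 (a, i)) \<in> {cls M2 f2 (b, j) |b j. b \<in> {p2}}"
          using ptor by blast
        show "\<forall>a\<in>{p1}. \<forall>i. phi (cls M1 f1 (a, i)) \<in> {cls M2 f2 (b, j) |b j. b \<in> M2}"
          using ptor p1M p2M by blast
        show "M1 \<noteq> {p1} \<or> {p2} \<noteq> {p2}" using c by blast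
        show "{p1} \<noteq> {p1} \<or> M2 \<noteq> {p2}" using c by blast
      qed
      then show False using nd by simp
    qed
    show ?thesis
    proof (cases "M2 = {p2}")
      case True
      then have M1ne: "M1 \<noteq> {p1}" using ne by simp
      have ind1: "mod_indecomp M1 p1 f1" unfolding mod_indecomp_def
      proof (intro conjI notI)
        show "M1 = {p1} \<Longrightarrow> False" using M1ne by simp
      next
        assume "\<exists>A B. mod_split M1 p1 f1 A B \<and> A \<noteq> {p1} \<and> B \<noteq> {p1}"
        then obtain A B where s: "mod_split M1 p1 f1 A B" "A \<noteq> {p1}" "B \<noteq> {p1}" by blast
        have AM: "A \<subseteq> M1" "B \<subseteq> M1" using s(1) by (auto simp: mod_split_def)
        have "triple_decomposable M1 p1 f1 M2 p2 f2 phi" unfolding triple_decomposable_def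
        proof (intro exI conjI)
          show "mod_split M1 p1 f1 A B" by (rule s(1))
          show "mod_split M2 p2 f2 {p2} {p2}" using True triv1[OF mod2] by simp
          show "\<forall>a\<in>A. \<forall>i. phi (cls M1 f1 (a, i)) \<in> {cls M2 f2 (b, j) |b j. b \<in> {p2}}"
            using ptor AM by blast
          show "\<forall>a\<in>B. \<forall>i. phi (cls M1 f1 (a, i)) \<in> {cls M2 f2 (b, j) |b j. b \<in> {p2}}"
            using ptor AM by blast
          show "A \<noteq> {p1} \<or> {p2} \<noteq> {p2}" using s by blast
          show "B \<noteq> {p1} \<or> {p2} \<noteq> {p2}" using s by blast
        qed
        then show False using nd by simp
      qed
      have "graph_type1 M1 p1 f1" by (rule type1[OF mod1 tor1 ind1])
      then show ?thesis using ind1 True tt by blast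
    next
      case False
      then have M1e: "M1 = {p1}" using one by simp
      have ind2: "mod_indecomp M2 p2 f2" unfolding mod_indecomp_def
      proof (intro conjI notI)
        show "M2 = {p2} \<Longrightarrow> False" using False by simp
      next
        assume "\<exists>A B. mod_split M2 p2 f2 A B \<and> A \<noteq> {p2} \<and> B \<noteq> {p2}"
        then obtain A B where s: "mod_split M2 p2 f2 A B" "A \<noteq> {p2}" "B \<noteq> {p2}" by blast
        have pAB: "p2 \<in> A" "p2 \<in> B" using s(1) by (auto simp: mod_split_def is_mod_def)
        have "triple_decomposable M1 p1 f1 M2 p2 f2 phi" unfolding triple_decomposable_def
        proof (intro exI conjI)
          show "mod_split M1 p1 f1 {p1} {p1}" using M1e triv1[OF mod1] by simp
          show "mod_split M2 p2 f2 A B" by (rule s(1))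
          show "\<forall>a\<in>{p1}. \<forall>i. phi (cls M1 f1 (a, i)) \<in> {cls M2 f2 (b, j) |b j. b \<in> A}"
            using ptor p1M pAB by blast
          show "\<forall>a\<in>{p1}. \<forall>i. phi (cls M1 f1 (a, i)) \<in> {cls M2 f2 (b, j) |b j. b \<in> B}"
            using ptor p1M pAB by blast
          show "{p1} \<noteq> {p1} \<or> A \<noteq> {p2}" using s by blast
          show "{p1} \<noteq> {p1} \<or> B \<noteq> {p2}" using s by blast
        qed
        then show False using nd by simp
      qed
      have "graph_type1 M2 p2 f2" by (rule type1[OF mod2 tor2 ind2])
      then show ?thesis using ind2 M1e tt by blast
    qed
  next
    case False
    then have TT: "T1 = {p1}" "T2 = {p2}" using AB by auto
    have tf1: "mod_torsion_free M1 p1 f1" unfolding mod_torsion_free_def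
      using TT(1) unfolding T1_def by blast
    have tf2: "mod_torsion_free M2 p2 f2" unfolding mod_torsion_free_def
      using TT(2) unfolding T2_def by blast
    have ptin1: "loc_pt M1 f1 p1 \<in> loc M1 f1" by (rule loc_pt_in[OF mod1])
    have ptin2: "loc_pt M2 f2 p2 \<in> loc M2 f2" by (rule loc_pt_in[OF mod2])
    have M12: "M2 = {p2}" if M1e: "M1 = {p1}"
    proof -
      have "mod_torsion M1 p1 f1" unfolding mod_torsion_def using M1e p1t by blast
      then have L1: "\<forall>x\<in>loc M1 f1. x = loc_pt M1 f1 p1" using loc_torsion[OF mod1] by blast
      have "\<forall>y\<in>loc M2 f2. y = loc_pt M2 f2 p2"
      proof
        fix y assume "y \<in> loc M2 f2"
        then obtain x where "x \<in> loc M1 f1" "y = phi x" using img by blast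
        then show "y = loc_pt M2 f2 p2" using L1 ptm by simp
      qed
      then show ?thesis by (rule triv_loc_tf[OF mod2 tf2])
    qed
    have M21: "M1 = {p1}" if M2e: "M2 = {p2}"
    proof -
      have "mod_torsion M2 p2 f2" unfolding mod_torsion_def using M2e p2t by blast
      then have L2: "\<forall>x\<in>loc M2 f2. x = loc_pt M2 f2 p2" using loc_torsion[OF mod2] by blast
      have "\<forall>x\<in>loc M1 f1. x = loc_pt M1 f1 p1"
      proof
        fix x assume x: "x \<in> loc M1 f1"
        then have "phi x \<in> loc M2 f2" using img by blast
        then have "phi x = phi (loc_pt M1 f1 p1)" using L2 ptm by simp
        then show "x = loc_pt M1 f1 p1" using inj x ptin1 unfolding inj_on_def by blast
      qed
      then show ?thesis by (rule triv_loc_tf[OF mod1 tf1])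
    qed
    have M1ne: "M1 \<noteq> {p1}" and M2ne: "M2 \<noteq> {p2}" using ne M12 M21 by blast+
    have comm1: "\<forall>x\<in>loc M1 f1. loc_fwd M2 f2 (phi x) = phi (loc_bwd M1 f1 x)"
    proof
      fix x assume x: "x \<in> loc M1 f1"
      define y where "y = loc_bwd M1 f1 x"
      have y: "y \<in> loc M1 f1" "loc_fwd M1 f1 y = x" using loc_bwd_in[OF x] loc_fwd_bwd[OF mod1 x]
        by (auto simp: y_def)
      have "phi x = loc_bwd M2 f2 (phi y)" using comm y by metis
      moreover have "phi y \<in> loc M2 f2" using img y by blast
      ultimately have "loc_fwd M2 f2 (phi x) = phi y" using loc_fwd_bwd[OF mod2] by simp
      then show "loc_fwd M2 f2 (phi x) = phi (loc_bwd M1 f1 x)" by (simp add: y_def)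
    qed
    have swap: "mod_split M p f B A" if "mod_split M p f A B" for M p f A B
      using that by (auto simp: mod_split_def)
    have ind1: "mod_indecomp M1 p1 f1" unfolding mod_indecomp_def
    proof (intro conjI notI)
      show "M1 = {p1} \<Longrightarrow> False" using M1ne by simp
    next
      assume "\<exists>A B. mod_split M1 p1 f1 A B \<and> A \<noteq> {p1} \<and> B \<noteq> {p1}"
      then obtain A B where s: "mod_split M1 p1 f1 A B" "A \<noteq> {p1}" "B \<noteq> {p1}" by blast
      have AM: "A \<subseteq> M1" "B \<subseteq> M1" using s(1) by (auto simp: mod_split_def)
      note sp = transfer_split[OF mod1 mod2 tf1 tf2 bij ptm comm1 s(1)]
      note iA = transfer_side[OF mod1 mod2 tf1 bij comm1 s(1)]
      note iB = transfer_side[OF mod1 mod2 tf1 bij comm1 swap[OF s(1)]]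
      have "triple_decomposable M1 p1 f1 M2 p2 f2 phi" unfolding triple_decomposable_def
      proof (intro exI conjI)
        show "mod_split M1 p1 f1 A B" by (rule s(1))
        show "mod_split M2 p2 f2 {b \<in> M2. cls M2 f2 (b, 0) \<in> phi ` clsset M1 f1 A}
                                {b \<in> M2. cls M2 f2 (b, 0) \<in> phi ` clsset M1 f1 B}" by (rule sp)
        show "\<forall>a\<in>A. \<forall>i. phi (cls M1 f1 (a, i)) \<in> {cls M2 f2 (b, j) |b j.
                 b \<in> {b \<in> M2. cls M2 f2 (b, 0) \<in> phi ` clsset M1 f1 A}}"
        proof (intro ballI allI)
          fix a i assume a: "a \<in> A"
          have "cls M1 f1 (a,i) \<in> loc M1 f1" using loc1 AM a by blast
          moreover have "cls M1 f1 (a,i) \<in> clsset M1 f1 A" using a by (auto simp: clsset_def)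
          ultimately have "phi (cls M1 f1 (a,i)) \<in> clsset M2 f2 {b \<in> M2. cls M2 f2 (b, 0) \<in> phi ` clsset M1 f1 A}"
            using iA by blast
          then show "phi (cls M1 f1 (a, i)) \<in> {cls M2 f2 (b, j) |b j.
                 b \<in> {b \<in> M2. cls M2 f2 (b, 0) \<in> phi ` clsset M1 f1 A}}" by (simp add: clsset_def)
        qed
        show "\<forall>a\<in>B. \<forall>i. phi (cls M1 f1 (a, i)) \<in> {cls M2 f2 (b, j) |b j.
                 b \<in> {b \<in> M2. cls M2 f2 (b, 0) \<in> phi ` clsset M1 f1 B}}"
        proof (intro ballI allI)
          fix a i assume a: "a \<in> B"
          have "cls M1 f1 (a,i) \<in> loc M1 f1" using loc1 AM a by blast
          moreover have "cls M1 f1 (a,i) \<in> clsset M1 f1 B" using a by (auto simp: clsset_def)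
          ultimately have "phi (cls M1 f1 (a,i)) \<in> clsset M2 f2 {b \<in> M2. cls M2 f2 (b, 0) \<in> phi ` clsset M1 f1 B}"
            using iB by blast
          then show "phi (cls M1 f1 (a, i)) \<in> {cls M2 f2 (b, j) |b j.
                 b \<in> {b \<in> M2. cls M2 f2 (b, 0) \<in> phi ` clsset M1 f1 B}}" by (simp add: clsset_def)
        qed
        show "A \<noteq> {p1} \<or> {b \<in> M2. cls M2 f2 (b, 0) \<in> phi ` clsset M1 f1 A} \<noteq> {p2}" using s by blast
        show "B \<noteq> {p1} \<or> {b \<in> M2. cls M2 f2 (b, 0) \<in> phi ` clsset M1 f1 B} \<noteq> {p2}" using s by blast
      qed
      then show False using nd by simp
    qed
    define psi where "psi = inv_into (loc M1 f1) phi"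
    have bijpsi: "bij_betw psi (loc M2 f2) (loc M1 f1)" unfolding psi_def by (rule bij_betw_inv_into[OF bij])
    have psiphi: "psi (phi x) = x" if "x \<in> loc M1 f1" for x
      unfolding psi_def using inv_into_f_f[OF inj that] .
    have phipsi: "phi (psi y) = y" if "y \<in> loc M2 f2" for y
      unfolding psi_def using f_inv_into_f[of y phi "loc M1 f1"] img that by blast
    have psiin: "psi y \<in> loc M1 f1" if "y \<in> loc M2 f2" for y
      unfolding psi_def using inv_into_into[of y phi "loc M1 f1"] img that by blast
    have ptpsi: "psi (loc_pt M2 f2 p2) = loc_pt M1 f1 p1" using psiphi[OF ptin1] ptm by simp
    have commpsi: "\<forall>y\<in>loc M2 f2. loc_fwd M1 f1 (psi y) = psi (loc_bwd M2 f2 y)"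
    proof
      fix y assume y: "y \<in> loc M2 f2"
      define x where "x = psi y"
      have x: "x \<in> loc M1 f1" "phi x = y" using psiin[OF y] phipsi[OF y] by (auto simp: x_def)
      have "loc_bwd M2 f2 y = phi (loc_fwd M1 f1 x)" using comm x by metis
      then have "psi (loc_bwd M2 f2 y) = loc_fwd M1 f1 x" using psiphi loc_fwd_in[OF mod1 x(1)] by simp
      then show "loc_fwd M1 f1 (psi y) = psi (loc_bwd M2 f2 y)" by (simp add: x_def)
    qed
    have ind2: "mod_indecomp M2 p2 f2" unfolding mod_indecomp_def
    proof (intro conjI notI)
      show "M2 = {p2} \<Longrightarrow> False" using M2ne by simp
    next
      assume "\<exists>A B. mod_split M2 p2 f2 A B \<and> A \<noteq> {p2} \<and> B \<noteq> {p2}"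
      then obtain A B where s: "mod_split M2 p2 f2 A B" "A \<noteq> {p2}" "B \<noteq> {p2}" by blast
      note sp = transfer_split[OF mod2 mod1 tf2 tf1 bijpsi ptpsi commpsi s(1)]
      note iA = transfer_side[OF mod2 mod1 tf2 bijpsi commpsi s(1)]
      note iB = transfer_side[OF mod2 mod1 tf2 bijpsi commpsi swap[OF s(1)]]
      have "triple_decomposable M1 p1 f1 M2 p2 f2 phi" unfolding triple_decomposable_def
      proof (intro exI conjI)
        show "mod_split M1 p1 f1 {b \<in> M1. cls M1 f1 (b, 0) \<in> psi ` clsset M2 f2 A}
                                {b \<in> M1. cls M1 f1 (b, 0) \<in> psi ` clsset M2 f2 B}" by (rule sp)
        show "mod_split M2 p2 f2 A B" by (rule s(1))
        show "\<forall>a\<in>{b \<in> M1. cls M1 f1 (b, 0) \<in> psi ` clsset M2 f2 A}. \<forall>i.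
                 phi (cls M1 f1 (a, i)) \<in> {cls M2 f2 (b, j) |b j. b \<in> A}"
        proof (intro ballI allI)
          fix a i assume a: "a \<in> {b \<in> M1. cls M1 f1 (b, 0) \<in> psi ` clsset M2 f2 A}"
          have x: "cls M1 f1 (a,i) \<in> loc M1 f1" using loc1 a by blast
          have "cls M1 f1 (a,i) \<in> clsset M1 f1 {b \<in> M1. cls M1 f1 (b, 0) \<in> psi ` clsset M2 f2 A}"
            using a by (auto simp: clsset_def)
          then have "psi (phi (cls M1 f1 (a,i))) \<in> clsset M1 f1 {b \<in> M1. cls M1 f1 (b, 0) \<in> psi ` clsset M2 f2 A}"
            using psiphi[OF x] by simp
          moreover have "phi (cls M1 f1 (a,i)) \<in> loc M2 f2" using img x by blast
          ultimately have "phi (cls M1 f1 (a,i)) \<in> clsset M2 f2 A" using iA by blast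
          then show "phi (cls M1 f1 (a, i)) \<in> {cls M2 f2 (b, j) |b j. b \<in> A}" by (simp add: clsset_def)
        qed
        show "\<forall>a\<in>{b \<in> M1. cls M1 f1 (b, 0) \<in> psi ` clsset M2 f2 B}. \<forall>i.
                 phi (cls M1 f1 (a, i)) \<in> {cls M2 f2 (b, j) |b j. b \<in> B}"
        proof (intro ballI allI)
          fix a i assume a: "a \<in> {b \<in> M1. cls M1 f1 (b, 0) \<in> psi ` clsset M2 f2 B}"
          have x: "cls M1 f1 (a,i) \<in> loc M1 f1" using loc1 a by blast
          have "cls M1 f1 (a,i) \<in> clsset M1 f1 {b \<in> M1. cls M1 f1 (b, 0) \<in> psi ` clsset M2 f2 B}"
            using a by (auto simp: clsset_def)
          then have "psi (phi (cls M1 f1 (a,i))) \<in> clsset M1 f1 {b \<in> M1. cls M1 f1 (b, 0) \<in> psi ` clsset M2 f2 B}"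
            using psiphi[OF x] by simp
          moreover have "phi (cls M1 f1 (a,i)) \<in> loc M2 f2" using img x by blast
          ultimately have "phi (cls M1 f1 (a,i)) \<in> clsset M2 f2 B" using iB by blast
          then show "phi (cls M1 f1 (a, i)) \<in> {cls M2 f2 (b, j) |b j. b \<in> B}" by (simp add: clsset_def)
        qed
        show "{b \<in> M1. cls M1 f1 (b, 0) \<in> psi ` clsset M2 f2 A} \<noteq> {p1} \<or> A \<noteq> {p2}" using s by blast
        show "{b \<in> M1. cls M1 f1 (b, 0) \<in> psi ` clsset M2 f2 B} \<noteq> {p1} \<or> B \<noteq> {p2}" using s by blast
      qed
      then show False using nd by simp
    qed
    have ttf: "triple_torsion_free M1 p1 f1 M2 p2 f2" unfolding triple_torsion_free_def
      using tf1 tf2 tf_loc(1)[OF mod1 tf1] tf_loc(2)[OF mod2 tf2] by blast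
    have cl1: "\<forall>x\<in>loc M1 f1. loc_fwd M1 f1 x \<in> loc M1 f1" using loc_fwd_in[OF mod1] by blast
    have bijof: "bij_betw a N1 N2" if "lmod_iso N1 q1 s1 N2 q2 s2 a" for N1 q1 s1 N2 q2 s2 a
      using that by (simp add: lmod_iso_def)
    note c1 = classify[OF mod1 tf1 ind1 fg1]
    note c2 = classify[OF mod2 tf2 ind2 fg2]
    have first: "(mod_indecomp M1 p1 f1 \<or> M1 = {p1}) \<and> (mod_indecomp M2 p2 f2 \<or> M2 = {p2})"
      using ind1 ind2 by blast
    show ?thesis
    proof (cases "graph_type2 M1 p1 f1 \<and>
          (\<exists>\<alpha>. lmod_iso (loc M1 f1) (loc_pt M1 f1 p1) (loc_fwd M1 f1) L_car None L_t \<alpha>)")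
      case True
      then obtain \<alpha> where g1: "graph_type2 M1 p1 f1"
        and a: "lmod_iso (loc M1 f1) (loc_pt M1 f1 p1) (loc_fwd M1 f1) L_car None L_t \<alpha>" by blast
      show ?thesis
      proof (cases "graph_type2 M2 p2 f2 \<and>
          (\<exists>\<alpha>. lmod_iso (loc M2 f2) (loc_pt M2 f2 p2) (loc_bwd M2 f2) L_car None L_t \<alpha>)")
        case True
        then obtain \<beta> where g2: "graph_type2 M2 p2 f2"
          and b: "lmod_iso (loc M2 f2) (loc_pt M2 f2 p2) (loc_bwd M2 f2) L_car None L_t \<beta>" by blast
        obtain n where n: "\<forall>x\<in>loc M1 f1. \<beta> (phi x) = phiL n (\<alpha> x)"
          using glue_L[OF a b iso ptin1 cl1] by blast
        show ?thesis using first g1 g2 a b n ttf by blast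
      next
        case False
        then obtain k2 \<beta> where b: "lmod_iso (loc M2 f2) (loc_pt M2 f2 p2) (loc_bwd M2 f2) (C_car k2) None (C_t k2) \<beta>"
          using c2 by blast
        have False using bij_LC[OF bijof[OF a] bijof[OF b] bij] infinite_L finite_C by blast
        then show ?thesis by simp
      qed
    next
      case False
      then obtain k1 \<alpha> where k1: "k1 \<ge> 1" and g1: "graph_type3 M1 p1 f1"
        and a: "lmod_iso (loc M1 f1) (loc_pt M1 f1 p1) (loc_fwd M1 f1) (C_car k1) None (C_t k1) \<alpha>"
        using c1 by blast
      show ?thesis
      proof (cases "graph_type2 M2 p2 f2 \<and>
          (\<exists>\<alpha>. lmod_iso (loc M2 f2) (loc_pt M2 f2 p2) (loc_bwd M2 f2) L_car None L_t \<alpha>)")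
        case True
        then obtain \<beta> where b: "lmod_iso (loc M2 f2) (loc_pt M2 f2 p2) (loc_bwd M2 f2) L_car None L_t \<beta>"
          by blast
        have False using bij_LC[OF bijof[OF a] bijof[OF b] bij] infinite_L finite_C by blast
        then show ?thesis by simp
      next
        case False
        then obtain k2 \<beta> where g2: "graph_type3 M2 p2 f2"
          and b: "lmod_iso (loc M2 f2) (loc_pt M2 f2 p2) (loc_bwd M2 f2) (C_car k2) None (C_t k2) \<beta>"
          using c2 by blast
        have kk: "k1 = k2" using bij_card_k[OF bijof[OF a] bijof[OF b] bij] .
        obtain m where m: "\<forall>x\<in>loc M1 f1. \<beta> (phi x) = psiC k1 m (\<alpha> x)"
          using glue_C[OF a _ iso ptin1 cl1 k1] b kk by blast
        show ?thesis using first g1 g2 a b kk m ttf k1 by blast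
      qed
    qed
  qed
qed

end
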